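(* There is a positive constant $C$ (depending only on $r$) such that for all $N\ge1$, all $S>0$ and all $\delta>0$, $$\sum_{k=1}^N P\Big(\Big|W_k\Big(X_{k,N}-\Big(\frac kN\Big)^r\Big)\Big|>\frac{\delta S}{2N}\Big)\le C\Big(\frac{N^{1-r}}{\delta S}\Big)^{2/(3-2r)}.$$
   Context: Fix $r\in(0,1)$. Multitype Yule process: at time $0$ a single individual of type $1$ is born; no deaths; each individual independently gives birth at rate $1$; a newborn has, independently, its parent's type with probability $1-r$ and otherwise a brand-new type. Individuals are numbered in order of birth (the initial one is the 1st); if the $k$-th individual born has a type different from its parent, that type is called type $k$. $T_N$ is the time the population reaches size $N$; $X_{k,N}$ is the fraction of individuals at time $T_N$ with type in $\{1,\dots,k\}$; $V_{k,N}$ is the fraction, among individuals at time $T_N$ with type in $\{1,\dots,k\}$, of those that have type $k$. $W_k=\lim_{N\to\infty}V_{k,N}$ (exists a.s.); the $W_k$ are independent, $W_1=1$, and for $k\ge2$, $P(W_k>0)=r$ and given $W_k>0$, $W_k\sim\mathrm{Beta}(1,k-1)$. *)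

theory Defs
  imports "HOL-Probability.Probability"
begin

text \<open>Discrete (jump-chain) model of the multitype Yule process, observed at the birth
times T_2, T_3, ... .  At step j (j = 0,1,2,...)
individual number j+2 is born; its parent is fst (omega j), uniform on {1..j+1}
(in a Yule process every current individual is equally likely to be the next parent),
and snd (omega j) = True (probability r) means the newborn gets a brand-new type,
namely type j+2.  All steps are independent.\<close>

definition yule_space :: "real \<Rightarrow> (nat \<Rightarrow> nat \<times> bool) measure" where
  "yule_space r = PiM UNIV (\<lambda>j. measure_pmf (pair_pmf (pmf_of_set {1..Suc j}) (bernoulli_pmf r)))"

text \<open>types omega n = list of the types of individuals 1..n (entry i-1 is the type of
individual i).\<close>
primrec types :: "(nat \<Rightarrow> nat \<times> bool) \<Rightarrow> nat \<Rightarrow> nat list" where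
  "types \<omega> 0 = []"
| "types \<omega> (Suc n) =
     (if n = 0 then [1]
      else types \<omega> n @
        [(if snd (\<omega> (n - 1)) then n + 1
          else (let p = fst (\<omega> (n - 1)) in
                if 1 \<le> p \<and> p \<le> n then types \<omega> n ! (p - 1) else 1))])"

definition ind_type :: "(nat \<Rightarrow> nat \<times> bool) \<Rightarrow> nat \<Rightarrow> nat" where
  "ind_type \<omega> i = types \<omega> i ! (i - 1)"

definition Xfrac :: "nat \<Rightarrow> nat \<Rightarrow> (nat \<Rightarrow> nat \<times> bool) \<Rightarrow> real" where
  "Xfrac k N \<omega> = real (card {i \<in> {1..N}. ind_type \<omega> i \<in> {1..k}}) / real N"

definition Vfrac :: "nat \<Rightarrow> nat \<Rightarrow> (nat \<Rightarrow> nat \<times> bool) \<Rightarrow> real" where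
  "Vfrac k N \<omega> = real (card {i \<in> {1..N}. ind_type \<omega> i = k})
                 / real (card {i \<in> {1..N}. ind_type \<omega> i \<in> {1..k}})"

text \<open>W_k = lim_{N\<rightarrow>\<infinity>} V_{k,N} (the limit exists almost surely).\<close>
definition Wlim :: "nat \<Rightarrow> (nat \<Rightarrow> nat \<times> bool) \<Rightarrow> real" where
  "Wlim k \<omega> = lim (\<lambda>N. Vfrac k N \<omega>)"

end

theory Submission
  imports Defs
begin

lemma length_types[simp]: "length (types \<omega> n) = n"
  by (induction n) (auto simp: Let_def)

lemma types_prefix: "m \<le> n \<Longrightarrow> take m (types \<omega> n) = types \<omega> m"
proof (induction n)
  case 0 then show ?case by simp
next
  case (Suc n)
  show ?case
  proof (cases "m = Suc n")
    case True then show ?thesis by simp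
  next
    case False
    then have "m \<le> n" using Suc by simp
    then show ?thesis using Suc.IH by (auto simp: Let_def)
  qed
qed

lemma types_nth: "1 \<le> i \<Longrightarrow> i \<le> n \<Longrightarrow> types \<omega> n ! (i - 1) = ind_type \<omega> i"
proof -
  assume a: "1 \<le> i" "i \<le> n"
  have "types \<omega> n ! (i - 1) = take i (types \<omega> n) ! (i - 1)" using a by simp
  also have "\<dots> = types \<omega> i ! (i - 1)" using types_prefix[OF a(2)] by simp
  finally show ?thesis by (simp add: ind_type_def)
qed

lemma ind_type_1[simp]: "ind_type \<omega> (Suc 0) = 1"
  by (simp add: ind_type_def)

lemma ind_type_Suc: "1 \<le> n \<Longrightarrow> ind_type \<omega> (Suc n) =
   (if snd (\<omega> (n - 1)) then n + 1 else (let p = fst (\<omega> (n - 1)) in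
     if 1 \<le> p \<and> p \<le> n then ind_type \<omega> p else 1))"
  using types_nth[of "fst (\<omega> (n - 1))" n \<omega>]
  by (auto simp: ind_type_def Let_def nth_append)

lemma ind_type_bounds: "1 \<le> i \<Longrightarrow> 1 \<le> ind_type \<omega> i \<and> ind_type \<omega> i \<le> i"
proof (induction i rule: less_induct)
  case (less i)
  show ?case
  proof (cases "i = 1")
    case True then show ?thesis by simp
  next
    case False
    then obtain n where n: "i = Suc n" "1 \<le> n" using less.prems by (cases i) auto
    show ?thesis using less.IH[of "fst (\<omega> (n - 1))"] n
      by (auto simp: ind_type_Suc Let_def)
  qed
qed

definition dep :: "nat \<Rightarrow> ((nat \<Rightarrow> nat \<times> bool) \<Rightarrow> 'a) \<Rightarrow> bool" where
  "dep j g \<longleftrightarrow> (\<forall>\<omega> \<omega>'. (\<forall>i<j. \<omega> i = \<omega>' i) \<longrightarrow> g \<omega> = g \<omega>')"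

lemma depD: "dep j g \<Longrightarrow> (\<And>i. i < j \<Longrightarrow> \<omega> i = \<omega>' i) \<Longrightarrow> g \<omega> = g \<omega>'"
  unfolding dep_def by blast

lemma dep_mono: "dep j g \<Longrightarrow> j \<le> j' \<Longrightarrow> dep j' g"
  unfolding dep_def by auto

lemma dep_const[simp]: "dep j (\<lambda>_. c)"
  unfolding dep_def by auto

lemma dep_comp: "dep j g \<Longrightarrow> dep j (\<lambda>\<omega>. f (g \<omega>))"
  unfolding dep_def by metis

lemma dep_comp2: "dep j g \<Longrightarrow> dep j h \<Longrightarrow> dep j (\<lambda>\<omega>. f (g \<omega>) (h \<omega>))"
  unfolding dep_def by metis

lemma dep_types: "dep (n - 1) (\<lambda>\<omega>. types \<omega> n)"
proof (induction n)
  case 0 then show ?case by (simp add: dep_def)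
next
  case (Suc n)
  show ?case unfolding dep_def
  proof (intro allI impI)
    fix \<omega> \<omega>' :: "nat \<Rightarrow> nat \<times> bool" assume h: "\<forall>i<Suc n - 1. \<omega> i = \<omega>' i"
    have "types \<omega> n = types \<omega>' n" using Suc.IH h unfolding dep_def by auto
    moreover have "n \<noteq> 0 \<Longrightarrow> \<omega> (n - 1) = \<omega>' (n - 1)" using h by auto
    ultimately show "types \<omega> (Suc n) = types \<omega>' (Suc n)" by (auto simp: Let_def)
  qed
qed

lemma dep_ind_type: "i \<le> n \<Longrightarrow> dep (n - 1) (\<lambda>\<omega>. ind_type \<omega> i)"
  unfolding ind_type_def
  by (rule dep_mono[OF dep_comp[OF dep_types[of i]]]) auto

lemma meas_map_prefix:
  fixes p :: "nat \<Rightarrow> (nat \<times> bool) pmf"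
  assumes "{..<m} \<subseteq> I"
  shows "(\<lambda>x. map x [0..<m]) \<in> measurable (PiM I (\<lambda>i. measure_pmf (p i))) (count_space UNIV)"
  using assms
proof (induction m)
  case 0 then show ?case by simp
next
  case (Suc m)
  have 1: "(\<lambda>x. map x [0..<m]) \<in> measurable (PiM I (\<lambda>i. measure_pmf (p i))) (count_space UNIV)"
    using Suc by (meson lessThan_subset_iff order.trans le_SucI order_refl)
  have "m \<in> I" using Suc.prems by auto
  then have 2: "(\<lambda>x. x m) \<in> measurable (PiM I (\<lambda>i. measure_pmf (p i))) (count_space UNIV)"
    using measurable_component_singleton[of m I "\<lambda>i. measure_pmf (p i)"]
    by (simp add: measurable_cong_sets)
  have 3: "(\<lambda>x. (map x [0..<m], x m)) \<in> measurable (PiM I (\<lambda>i. measure_pmf (p i)))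
      (count_space UNIV \<Otimes>\<^sub>M count_space UNIV)"
    using 1 2 by (rule measurable_Pair)
  have 4: "(count_space UNIV \<Otimes>\<^sub>M count_space UNIV :: ((nat \<times> bool) list \<times> (nat \<times> bool)) measure)
      = count_space UNIV"
    using pair_measure_countable[of "UNIV :: (nat \<times> bool) list set" "UNIV :: (nat \<times> bool) set"]
    by simp
  have 5: "(\<lambda>(l, y). l @ [y]) \<in> measurable (count_space UNIV \<Otimes>\<^sub>M count_space UNIV :: ((nat \<times> bool) list \<times> (nat \<times> bool)) measure) (count_space UNIV)"
    unfolding 4 by simp
  have "(\<lambda>x. (\<lambda>(l, y). l @ [y]) (map x [0..<m], x m)) \<in> measurable (PiM I (\<lambda>i. measure_pmf (p i))) (count_space UNIV)"
    using measurable_compose[OF 3 5] by simp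
  then show ?case by simp
qed

lemma dep_measurable:
  fixes p :: "nat \<Rightarrow> (nat \<times> bool) pmf" and g :: "(nat \<Rightarrow> nat \<times> bool) \<Rightarrow> real"
  assumes "dep m g" "{..<m} \<subseteq> I"
  shows "g \<in> borel_measurable (PiM I (\<lambda>i. measure_pmf (p i)))"
proof -
  define G where "G l = g (\<lambda>i. if i < length l then l ! i else undefined)" for l :: "(nat \<times> bool) list"
  have eq: "g x = G (map x [0..<m])" for x
    unfolding G_def by (rule depD[OF assms(1)]) auto
  have "(\<lambda>x. G (map x [0..<m])) \<in> borel_measurable (PiM I (\<lambda>i. measure_pmf (p i)))"
    using measurable_compose[OF meas_map_prefix[OF assms(2)], of G borel] by simp
  moreover have "g = (\<lambda>x. G (map x [0..<m]))" using eq by (rule ext)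
  ultimately show ?thesis by simp
qed

lemma step_integral:
  fixes p :: "nat \<Rightarrow> (nat \<times> bool) pmf" and F :: "(nat \<Rightarrow> nat \<times> bool) \<Rightarrow> nat \<times> bool \<Rightarrow> real"
  assumes dF: "\<And>x. dep j (\<lambda>\<omega>. F \<omega> x)" and bF: "\<And>\<omega> x. \<bar>F \<omega> x\<bar> \<le> B"
  shows "(\<integral>\<omega>. F \<omega> (\<omega> j) \<partial>PiM UNIV (\<lambda>i. measure_pmf (p i)))
       = (\<integral>\<omega>. (\<integral>x. F \<omega> x \<partial>measure_pmf (p j)) \<partial>PiM UNIV (\<lambda>i. measure_pmf (p i)))"
proof -
  let ?M = "\<lambda>i. measure_pmf (p i)"
  interpret product_prob_space ?M UNIV
    by (simp add: product_prob_space_def product_sigma_finite_def prob_space_measure_pmf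
        product_prob_space_axioms_def prob_space_imp_sigma_finite)
  define h where "h \<omega> = F \<omega> (\<omega> j)" for \<omega>
  define G where "G \<omega> = (\<integral>x. F \<omega> x \<partial>measure_pmf (p j))" for \<omega>
  have dh: "dep (Suc j) h"
    unfolding dep_def h_def
  proof (intro allI impI)
    fix \<omega> \<omega>' :: "nat \<Rightarrow> nat \<times> bool" assume a: "\<forall>i<Suc j. \<omega> i = \<omega>' i"
    then have "\<omega> j = \<omega>' j" by auto
    moreover have "F \<omega> x = F \<omega>' x" for x by (rule depD[OF dF]) (use a in auto)
    ultimately show "F \<omega> (\<omega> j) = F \<omega>' (\<omega>' j)" by simp
  qed
  have dG: "dep j G"
    unfolding dep_def G_def
  proof (intro allI impI)
    fix \<omega> \<omega>' :: "nat \<Rightarrow> nat \<times> bool" assume a: "\<forall>i<j. \<omega> i = \<omega>' i"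
    have "F \<omega> x = F \<omega>' x" for x by (rule depD[OF dF]) (use a in auto)
    then show "(\<integral>x. F \<omega> x \<partial>measure_pmf (p j)) = (\<integral>x. F \<omega>' x \<partial>measure_pmf (p j))" by simp
  qed
  have restr: "(\<integral>\<omega>. f \<omega> \<partial>PiM UNIV ?M) = (\<integral>\<omega>. f \<omega> \<partial>PiM J ?M)"
    if "dep m f" "J = {..<m}" for f :: "_ \<Rightarrow> real" and m J
  proof -
    have fm: "f \<in> borel_measurable (PiM J ?M)" using dep_measurable[OF that(1)] that(2) by auto
    have "(\<integral>\<omega>. f \<omega> \<partial>PiM J ?M) = (\<integral>\<omega>. f \<omega> \<partial>distr (PiM UNIV ?M) (PiM J ?M) (\<lambda>x. restrict x J))"
      using distr_PiM_restrict_finite[of J] that(2) by simp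
    also have "\<dots> = (\<integral>\<omega>. f (restrict \<omega> J) \<partial>PiM UNIV ?M)"
      by (rule integral_distr) (auto intro: measurable_restrict_subset fm)
    also have "\<dots> = (\<integral>\<omega>. f \<omega> \<partial>PiM UNIV ?M)"
    proof (rule Bochner_Integration.integral_cong[OF refl])
      fix \<omega> :: "nat \<Rightarrow> nat \<times> bool"
      show "f (restrict \<omega> J) = f \<omega>"
        using depD[OF that(1), of "restrict \<omega> J" \<omega>] that(2) by simp
    qed
    finally show ?thesis by simp
  qed
  have "(\<integral>\<omega>. h \<omega> \<partial>PiM UNIV ?M) = (\<integral>\<omega>. h \<omega> \<partial>PiM (insert j {..<j}) ?M)"
    using restr[OF dh] lessThan_Suc by simp
  also have "\<dots> = (\<integral>x. (\<integral>y. h (x(j:=y)) \<partial>?M j) \<partial>PiM {..<j} ?M)"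
  proof (rule product_integral_insert)
    interpret fm: finite_measure "PiM (insert j {..<j}) ?M"
      using prob_space_PiM[of _ ?M] prob_space_measure_pmf prob_space_def by blast
    show "integrable (Pi\<^sub>M (insert j {..<j}) ?M) h"
    proof (rule fm.integrable_const_bound[where B=B])
      show "AE x in Pi\<^sub>M (insert j {..<j}) ?M. norm (h x) \<le> B" using bF by (simp add: h_def)
      show "h \<in> borel_measurable (Pi\<^sub>M (insert j {..<j}) ?M)"
        using dep_measurable[OF dh] lessThan_Suc by auto
    qed
  qed auto
  also have "\<dots> = (\<integral>x. G x \<partial>PiM {..<j} ?M)"
  proof (rule Bochner_Integration.integral_cong[OF refl])
    fix x show "(\<integral>y. h (x(j:=y)) \<partial>?M j) = G x"
      unfolding G_def h_def
    proof (rule Bochner_Integration.integral_cong[OF refl])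
      fix y show "F (x(j := y)) ((x(j := y)) j) = F x y"
        using depD[OF dF, of "x(j := y)" x y] by simp
    qed
  qed
  also have "\<dots> = (\<integral>x. G x \<partial>PiM UNIV ?M)" using restr[OF dG] by simp
  finally show ?thesis by (simp add: h_def G_def)
qed

definition cnt :: "nat \<Rightarrow> nat \<Rightarrow> (nat \<Rightarrow> nat \<times> bool) \<Rightarrow> nat" where
  "cnt k n \<omega> = card {i \<in> {1..n}. ind_type \<omega> i \<in> {1..k}}"

definition acnt :: "nat \<Rightarrow> nat \<Rightarrow> (nat \<Rightarrow> nat \<times> bool) \<Rightarrow> nat" where
  "acnt k n \<omega> = card {i \<in> {1..n}. ind_type \<omega> i = k}"

lemma card_Suc_filter: "card {i \<in> {1..Suc n}. P i} = card {i \<in> {1..n}. P i} + (if P (Suc n) then 1 else 0)"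
proof -
  have "{i \<in> {1..Suc n}. P i} = {i \<in> {1..n}. P i} \<union> (if P (Suc n) then {Suc n} else {})"
    by (auto simp: le_Suc_eq)
  then show ?thesis by (auto simp: card_insert_if)
qed

lemma cnt_Suc: "cnt k (Suc n) \<omega> = cnt k n \<omega> + (if ind_type \<omega> (Suc n) \<in> {1..k} then 1 else 0)"
  unfolding cnt_def by (rule card_Suc_filter)

lemma acnt_Suc: "acnt k (Suc n) \<omega> = acnt k n \<omega> + (if ind_type \<omega> (Suc n) = k then 1 else 0)"
  unfolding acnt_def by (rule card_Suc_filter)

lemma cnt_le: "cnt k n \<omega> \<le> n"
proof -
  have "card {i \<in> {1..n}. ind_type \<omega> i \<in> {1..k}} \<le> card {1..n}"
    by (rule card_mono) auto
  then show ?thesis unfolding cnt_def by simp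
qed

lemma acnt_le_cnt: "1 \<le> k \<Longrightarrow> acnt k n \<omega> \<le> cnt k n \<omega>"
  unfolding cnt_def acnt_def by (rule card_mono) auto

lemma cnt_ge1: "1 \<le> k \<Longrightarrow> 1 \<le> n \<Longrightarrow> 1 \<le> cnt k n \<omega>"
proof -
  assume a: "1 \<le> k" "1 \<le> n"
  have "1 \<in> {i \<in> {1..n}. ind_type \<omega> i \<in> {1..k}}" using a by simp
  moreover have "finite {i \<in> {1..n}. ind_type \<omega> i \<in> {1..k}}" by simp
  ultimately have "card {i \<in> {1..n}. ind_type \<omega> i \<in> {1..k}} > 0"
    by (metis card_gt_0_iff empty_iff)
  then show ?thesis unfolding cnt_def by simp
qed

lemma cnt_k: "cnt k k \<omega> = k"
proof -
  have "ind_type \<omega> i \<in> {1..k}" if "i \<in> {1..k}" for i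
    using ind_type_bounds[of i \<omega>] that by simp
  then have "{i \<in> {1..k}. ind_type \<omega> i \<in> {1..k}} = {1..k}" by blast
  then show ?thesis by (simp add: cnt_def)
qed

lemma acnt_k: "acnt k k \<omega> \<le> 1"
proof -
  have "i = k" if "i \<in> {1..k}" "ind_type \<omega> i = k" for i
    using ind_type_bounds[of i \<omega>] that by simp
  then have "{i \<in> {1..k}. ind_type \<omega> i = k} \<subseteq> {k}" by blast
  then have "card {i \<in> {1..k}. ind_type \<omega> i = k} \<le> card {k}" by (rule card_mono[rotated]) simp
  then show ?thesis unfolding acnt_def by simp
qed

lemma dep_card: "dep (n - 1) (\<lambda>\<omega>. card {i \<in> {1..n}. P (ind_type \<omega> i)})"
  unfolding dep_def
proof (intro allI impI)
  fix \<omega> \<omega>' :: "nat \<Rightarrow> nat \<times> bool" assume a: "\<forall>i<n - 1. \<omega> i = \<omega>' i"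
  have "ind_type \<omega> i = ind_type \<omega>' i" if "i \<in> {1..n}" for i
    by (rule depD[OF dep_ind_type[of i n]]) (use that a in auto)
  then have "{i \<in> {1..n}. P (ind_type \<omega> i)} = {i \<in> {1..n}. P (ind_type \<omega>' i)}" by auto
  then show "card {i \<in> {1..n}. P (ind_type \<omega> i)} = card {i \<in> {1..n}. P (ind_type \<omega>' i)}" by simp
qed

lemma dep_cnt: "dep (n - 1) (cnt k n)"
  using dep_card[of n "\<lambda>t. t \<in> {1..k}"] unfolding cnt_def by simp

lemma dep_acnt: "dep (n - 1) (acnt k n)"
  using dep_card[of n "\<lambda>t. t = k"] unfolding acnt_def by simp

lemma sum_three:
  fixes t :: "nat \<Rightarrow> nat" and \<phi> :: "nat \<Rightarrow> nat \<Rightarrow> real"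
  assumes "finite S" "k \<in> K"
  shows "(\<Sum>p\<in>S. \<phi> (a + (if t p = k then 1 else 0)) (c + (if t p \<in> K then 1 else 0)))
    = real (card {p\<in>S. t p = k}) * \<phi> (a+1) (c+1)
      + (real (card {p\<in>S. t p \<in> K}) - real (card {p\<in>S. t p = k})) * \<phi> a (c+1)
      + (real (card S) - real (card {p\<in>S. t p \<in> K})) * \<phi> a c"
proof -
  let ?A = "{p\<in>S. t p = k}" and ?C = "{p\<in>S. t p \<in> K}"
  let ?B = "{p\<in>S. t p \<in> K \<and> t p \<noteq> k}" and ?D = "{p\<in>S. t p \<notin> K}"
  have "(\<Sum>p\<in>S. \<phi> (a + (if t p = k then 1 else 0)) (c + (if t p \<in> K then 1 else 0)))
     = (\<Sum>p\<in>S. (if t p = k then \<phi> (a+1) (c+1) else 0) + (if t p \<in> K \<and> t p \<noteq> k then \<phi> a (c+1) else 0)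
         + (if t p \<notin> K then \<phi> a c else 0))"
    by (rule sum.cong) (use assms in auto)
  also have "\<dots> = (\<Sum>p\<in>?A. \<phi> (a+1) (c+1)) + (\<Sum>p\<in>?B. \<phi> a (c+1)) + (\<Sum>p\<in>?D. \<phi> a c)"
    using assms(1) by (simp add: sum.distrib flip: sum.inter_filter)
  also have "\<dots> = real (card ?A) * \<phi> (a+1) (c+1) + real (card ?B) * \<phi> a (c+1) + real (card ?D) * \<phi> a c"
    by simp
  also have "card ?C = card ?A + card ?B"
  proof -
    have "?C = ?A \<union> ?B" using assms by auto
    moreover have "?A \<inter> ?B = {}" by auto
    ultimately show ?thesis using assms(1) by (simp add: card_Un_disjoint)
  qed
  moreover have "card S = card ?C + card ?D"
  proof -
    have "S = ?C \<union> ?D" by auto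
    moreover have "?C \<inter> ?D = {}" by auto
    ultimately show ?thesis using assms(1) card_Un_disjoint[of ?C ?D]
      by (metis (no_types, lifting) finite_Un)
  qed
  ultimately show ?thesis by simp
qed

definition Phi :: "real \<Rightarrow> nat \<Rightarrow> (nat \<Rightarrow> nat \<Rightarrow> real) \<Rightarrow> nat \<Rightarrow> nat \<Rightarrow> real" where
  "Phi r n \<phi> a c = r * \<phi> a c + (1 - r) / real n *
     (real a * \<phi> (a+1) (c+1) + (real c - real a) * \<phi> a (c+1) + (real n - real c) * \<phi> a c)"

lemma step_G:
  fixes g :: "(nat \<Rightarrow> nat \<times> bool) \<Rightarrow> real" and \<phi> :: "nat \<Rightarrow> nat \<Rightarrow> real"
  assumes n: "1 \<le> n" "k \<le> n" "1 \<le> k" and r: "0 \<le> r" "r \<le> 1"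
    and dg: "dep (n - 1) g" and bg: "\<And>\<omega>. \<bar>g \<omega>\<bar> \<le> Bg"
  shows "(\<integral>\<omega>. g \<omega> * \<phi> (acnt k (Suc n) \<omega>) (cnt k (Suc n) \<omega>) \<partial>yule_space r)
       = (\<integral>\<omega>. g \<omega> * Phi r n \<phi> (acnt k n \<omega>) (cnt k n \<omega>) \<partial>yule_space r)"
proof -
  define nt where "nt \<omega> x = (if snd x then n + 1 else if 1 \<le> fst x \<and> fst x \<le> n then ind_type \<omega> (fst x) else 1)"
    for \<omega> :: "nat \<Rightarrow> nat \<times> bool" and x :: "nat \<times> bool"
  define F where "F \<omega> x = g \<omega> * \<phi> (acnt k n \<omega> + (if nt \<omega> x = k then 1 else 0))
      (cnt k n \<omega> + (if nt \<omega> x \<in> {1..k} then 1 else 0))" for \<omega> x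
  define M\<phi> where "M\<phi> = (\<Sum>a\<le>Suc n. \<Sum>c\<le>Suc n. \<bar>\<phi> a c\<bar>)"
  let ?p = "\<lambda>j. pair_pmf (pmf_of_set {1..Suc j}) (bernoulli_pmf r)"
  have Yd: "yule_space r = PiM UNIV (\<lambda>j. measure_pmf (?p j))" by (simp add: yule_space_def)
  have phib: "\<bar>\<phi> a c\<bar> \<le> M\<phi>" if "a \<le> Suc n" "c \<le> Suc n" for a c
  proof -
    have "\<bar>\<phi> a c\<bar> \<le> (\<Sum>c\<le>Suc n. \<bar>\<phi> a c\<bar>)"
      by (rule member_le_sum[where f="\<lambda>c. \<bar>\<phi> a c\<bar>"]) (use that in auto)
    also have "\<dots> \<le> M\<phi>" unfolding M\<phi>_def
      by (rule member_le_sum[where f="\<lambda>a. \<Sum>c\<le>Suc n. \<bar>\<phi> a c\<bar>"]) (use that in auto)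
    finally show ?thesis .
  qed
  have Fb: "\<bar>F \<omega> x\<bar> \<le> Bg * M\<phi>" for \<omega> x
  proof -
    have "acnt k n \<omega> \<le> n" using acnt_le_cnt[OF n(3)] cnt_le le_trans by blast
    then have p1: "\<bar>\<phi> (acnt k n \<omega> + (if nt \<omega> x = k then 1 else 0))
      (cnt k n \<omega> + (if nt \<omega> x \<in> {1..k} then 1 else 0))\<bar> \<le> M\<phi>"
      using cnt_le[of k n \<omega>] by (intro phib) auto
    have p2: "0 \<le> Bg" using bg[of "\<lambda>_. (0, False)"] by (meson abs_ge_zero order_trans)
    show ?thesis unfolding F_def abs_mult
      by (rule mult_mono[OF bg p1 p2 abs_ge_zero])
  qed
  have dF: "dep (n - 1) (\<lambda>\<omega>. F \<omega> x)" for x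
  proof -
    have "dep (n - 1) (\<lambda>\<omega>. nt \<omega> x)"
    proof (cases "\<not> snd x \<and> 1 \<le> fst x \<and> fst x \<le> n")
      case True
      then show ?thesis unfolding nt_def using dep_ind_type[of "fst x" n] by simp
    next
      case False
      then have "nt \<omega> x = (if snd x then n + 1 else 1)" for \<omega> unfolding nt_def by auto
      then show ?thesis unfolding dep_def by simp
    qed
    then show ?thesis unfolding F_def dep_def
      using depD[OF dg] depD[OF dep_acnt[of n k]] depD[OF dep_cnt[of n k]]
      by (metis (no_types, lifting))
  qed
  have lhs: "g \<omega> * \<phi> (acnt k (Suc n) \<omega>) (cnt k (Suc n) \<omega>) = F \<omega> (\<omega> (n - 1))" for \<omega>
    unfolding F_def nt_def acnt_Suc cnt_Suc ind_type_Suc[OF n(1)] by (simp add: Let_def)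
  have inner: "(\<integral>x. F \<omega> x \<partial>measure_pmf (?p (n - 1))) = g \<omega> * Phi r n \<phi> (acnt k n \<omega>) (cnt k n \<omega>)" for \<omega>
  proof -
    have sn: "Suc (n - 1) = n" using n by simp
    have fin: "finite ({1..n} \<times> (UNIV :: bool set))" by simp
    have "(\<integral>x. F \<omega> x \<partial>measure_pmf (?p (n - 1))) = (\<Sum>x\<in>{1..n} \<times> UNIV. F \<omega> x * pmf (?p (n - 1)) x)"
      by (rule integral_measure_pmf_real[OF fin]) (use n in \<open>auto simp: set_pair_pmf sn\<close>)
    also have "\<dots> = (\<Sum>p\<in>{1..n}. \<Sum>b\<in>UNIV. F \<omega> (p, b) * pmf (?p (n - 1)) (p, b))"
      by (subst sum.cartesian_product) (simp add: case_prod_beta)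
    also have "\<dots> = (\<Sum>p\<in>{1..n}. F \<omega> (p, True) * (r / n) + F \<omega> (p, False) * ((1 - r) / n))"
      using n r by (intro sum.cong refl) (simp add: UNIV_bool pmf_pair sn)
    also have "\<dots> = (\<Sum>p\<in>{1..n}. F \<omega> (p, True)) * (r / n) + (\<Sum>p\<in>{1..n}. F \<omega> (p, False)) * ((1 - r) / n)"
      by (simp add: sum.distrib sum_distrib_right sum_divide_distrib)
    also have "(\<Sum>p\<in>{1..n}. F \<omega> (p, True)) = real n * (g \<omega> * \<phi> (acnt k n \<omega>) (cnt k n \<omega>))"
      using n by (simp add: F_def nt_def)
    also have "(\<Sum>p\<in>{1..n}. F \<omega> (p, False)) = g \<omega> * (\<Sum>p\<in>{1..n}. \<phi> (acnt k n \<omega> + (if ind_type \<omega> p = k then 1 else 0))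
      (cnt k n \<omega> + (if ind_type \<omega> p \<in> {1..k} then 1 else 0)))"
      by (simp add: F_def nt_def sum_distrib_left)
    also have "(\<Sum>p\<in>{1..n}. \<phi> (acnt k n \<omega> + (if ind_type \<omega> p = k then 1 else 0))
      (cnt k n \<omega> + (if ind_type \<omega> p \<in> {1..k} then 1 else 0)))
      = real (acnt k n \<omega>) * \<phi> (acnt k n \<omega> + 1) (cnt k n \<omega> + 1)
      + (real (cnt k n \<omega>) - real (acnt k n \<omega>)) * \<phi> (acnt k n \<omega>) (cnt k n \<omega> + 1)
      + (real n - real (cnt k n \<omega>)) * \<phi> (acnt k n \<omega>) (cnt k n \<omega>)"
      using sum_three[of "{1..n}" k "{1..k}" \<phi> "acnt k n \<omega>" "ind_type \<omega>" "cnt k n \<omega>"] n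
      by (simp add: acnt_def cnt_def)
    finally show ?thesis using n unfolding Phi_def by (simp add: field_simps)
  qed
  have "(\<integral>\<omega>. g \<omega> * \<phi> (acnt k (Suc n) \<omega>) (cnt k (Suc n) \<omega>) \<partial>yule_space r)
      = (\<integral>\<omega>. F \<omega> (\<omega> (n - 1)) \<partial>PiM UNIV (\<lambda>j. measure_pmf (?p j)))"
    unfolding Yd lhs ..
  also have "\<dots> = (\<integral>\<omega>. (\<integral>x. F \<omega> x \<partial>measure_pmf (?p (n - 1))) \<partial>PiM UNIV (\<lambda>j. measure_pmf (?p j)))"
    by (rule step_integral[OF dF Fb])
  also have "\<dots> = (\<integral>\<omega>. g \<omega> * Phi r n \<phi> (acnt k n \<omega>) (cnt k n \<omega>) \<partial>yule_space r)"
    unfolding Yd inner ..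
  finally show ?thesis .
qed

lemma prob_Y: "prob_space (yule_space r)"
  unfolding yule_space_def by (rule prob_space_PiM) (rule prob_space_measure_pmf)

lemma space_Y[simp]: "space (yule_space r) = UNIV"
  by (simp add: yule_space_def space_PiM)

lemma dep_meas_Y: "dep m g \<Longrightarrow> (g :: _ \<Rightarrow> real) \<in> borel_measurable (yule_space r)"
  unfolding yule_space_def by (rule dep_measurable) auto

lemma dep_integrable: "dep m g \<Longrightarrow> (\<And>\<omega>. \<bar>g \<omega>\<bar> \<le> B) \<Longrightarrow> integrable (yule_space r) (g :: _ \<Rightarrow> real)"
proof -
  assume a: "dep m g" "\<And>\<omega>. \<bar>g \<omega>\<bar> \<le> B"
  interpret prob_space "yule_space r" by (rule prob_Y)
  show ?thesis by (rule integrable_const_bound[where B=B]) (use a dep_meas_Y in auto)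
qed

lemma aux_V: fixes X Z :: real assumes "Z > 0"
  shows "X * ((X + 1) / (Z + 1)) + (Z - X) * (X / (Z + 1)) = X"
proof -
  have d: "Z + 1 \<noteq> 0" using assms by simp
  have "X * ((X + 1) / (Z + 1)) + (Z - X) * (X / (Z + 1)) = (X * (X + 1) + (Z - X) * X) / (Z + 1)"
    by (simp only: times_divide_eq_right) (rule add_divide_distrib[symmetric])
  also have "X * (X + 1) + (Z - X) * X = X * (Z + 1)" by (simp add: algebra_simps)
  finally show ?thesis using d by simp
qed
lemma aux_Q: fixes X Z :: real assumes "Z > 0"
  shows "X * ((X + 1) * (X + 1 + 1) / ((Z + 1) * (Z + 1 + 1))) + (Z - X) * (X * (X + 1) / ((Z + 1) * (Z + 1 + 1)))
     = Z * (X * (X + 1) / (Z * (Z + 1)))"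
proof -
  have d: "Z + 1 \<noteq> 0" "Z + 1 + 1 \<noteq> 0" "Z \<noteq> 0" using assms by auto
  have "X * ((X + 1) * (X + 1 + 1) / ((Z + 1) * (Z + 1 + 1))) + (Z - X) * (X * (X + 1) / ((Z + 1) * (Z + 1 + 1)))
    = (X * ((X + 1) * (X + 1 + 1)) + (Z - X) * (X * (X + 1))) / ((Z + 1) * (Z + 1 + 1))"
    by (simp only: times_divide_eq_right) (rule add_divide_distrib[symmetric])
  also have "X * ((X + 1) * (X + 1 + 1)) + (Z - X) * (X * (X + 1)) = (X * (X + 1)) * (Z + 1 + 1)"
    by (simp add: algebra_simps)
  also have "(X * (X + 1)) * (Z + 1 + 1) / ((Z + 1) * (Z + 1 + 1)) = X * (X + 1) / (Z + 1)"
    using d by simp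
  also have "X * (X + 1) / (Z + 1) = Z * (X * (X + 1) / (Z * (Z + 1)))"
    using d by simp
  finally show ?thesis .
qed
lemma aux_sq: fixes a c :: real assumes "0 \<le> a" "a \<le> c" "1 \<le> c"
  shows "(a / c)\<^sup>2 \<le> a * (a + 1) / (c * (c + 1))"
proof -
  have "a / c \<le> (a + 1) / (c + 1)" using assms by (simp add: divide_simps algebra_simps)
  then have "(a / c) * (a / c) \<le> (a / c) * ((a + 1) / (c + 1))"
    using assms by (intro mult_left_mono) auto
  then show ?thesis by (simp add: power2_eq_square)
qed

definition Vf :: "nat \<Rightarrow> nat \<Rightarrow> (nat \<Rightarrow> nat \<times> bool) \<Rightarrow> real" where
  "Vf k n \<omega> = real (acnt k n \<omega>) / real (cnt k n \<omega>)"

definition Qv :: "nat \<Rightarrow> nat \<Rightarrow> real" where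
  "Qv a c = real a * (real a + 1) / (real c * (real c + 1))"

definition Qf :: "nat \<Rightarrow> nat \<Rightarrow> (nat \<Rightarrow> nat \<times> bool) \<Rightarrow> real" where
  "Qf k n \<omega> = Qv (acnt k n \<omega>) (cnt k n \<omega>)"

lemma Vf_eq: "Vfrac k n \<omega> = Vf k n \<omega>"
  by (simp add: Vfrac_def Vf_def acnt_def cnt_def)

lemma dep_Vf: "dep (n - 1) (Vf k n)"
  unfolding Vf_def using dep_comp2[OF dep_acnt[of n k] dep_cnt[of n k], of "\<lambda>a c. real a / real c"] by simp

lemma dep_Qf: "dep (n - 1) (Qf k n)"
  unfolding Qf_def using dep_comp2[OF dep_acnt[of n k] dep_cnt[of n k], of Qv] by simp

lemma dep_cntr: "dep (n - 1) (\<lambda>\<omega>. f (cnt k n \<omega>))"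
  using dep_comp[OF dep_cnt] by blast

lemma Vf_bounds: "1 \<le> k \<Longrightarrow> 0 \<le> Vf k n \<omega> \<and> Vf k n \<omega> \<le> 1"
  unfolding Vf_def using acnt_le_cnt[of k n \<omega>]
  by (auto simp: divide_le_eq_1)

lemma Qv_bounds: "a \<le> c \<Longrightarrow> 0 \<le> Qv a c \<and> Qv a c \<le> 1"
proof -
  assume "a \<le> c"
  then have "real a * (real a + 1) \<le> real c * (real c + 1)" by (intro mult_mono) auto
  then show ?thesis unfolding Qv_def by (auto simp: divide_le_eq_1)
qed

lemma Qf_bounds: "1 \<le> k \<Longrightarrow> 0 \<le> Qf k n \<omega> \<and> Qf k n \<omega> \<le> 1"
  unfolding Qf_def using acnt_le_cnt Qv_bounds by blast

lemma Vf_sq_le_Qf: "1 \<le> k \<Longrightarrow> 1 \<le> n \<Longrightarrow> (Vf k n \<omega>)\<^sup>2 \<le> Qf k n \<omega>"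
proof -
  assume k: "1 \<le> k" "1 \<le> n"
  define a where "a = real (acnt k n \<omega>)"
  define c where "c = real (cnt k n \<omega>)"
  have ac: "a \<le> c" "1 \<le> c" "0 \<le> a" using acnt_le_cnt[OF k(1)] cnt_ge1[OF k] by (auto simp: a_def c_def)
  have "(a / c)\<^sup>2 \<le> a * (a + 1) / (c * (c + 1))" using aux_sq ac by simp
  then show ?thesis by (simp add: Vf_def Qf_def Qv_def a_def c_def)
qed

lemma Qf_k: "1 \<le> k \<Longrightarrow> Qf k k \<omega> \<le> 2 / (real k)\<^sup>2"
proof -
  assume k: "1 \<le> k"
  have a: "real (acnt k k \<omega>) \<le> 1" using acnt_k[of k \<omega>] by simp
  have "real (acnt k k \<omega>) * (real (acnt k k \<omega>) + 1) \<le> 1 * 2"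
    using a by (intro mult_mono) auto
  moreover have "real k * real k \<le> real k * (real k + 1)" using k by simp
  ultimately have "real (acnt k k \<omega>) * (real (acnt k k \<omega>) + 1) / (real k * (real k + 1)) \<le> 2 / (real k * real k)"
    using k by (intro frac_le) auto
  then show ?thesis by (simp add: Qf_def Qv_def cnt_k power2_eq_square)
qed

lemma Phi_V:
  assumes "1 \<le> c" "c \<le> n" "a \<le> c" "0 < n"
  shows "Phi r n (\<lambda>a c. real a / real c) a c = real a / real c"
proof -
  have c: "real c > 0" "real n > 0" using assms by auto
  have e: "real a * ((real a + 1) / (real c + 1)) + (real c - real a) * (real a / (real c + 1)) = real a"
    using aux_V c by simp
  have "Phi r n (\<lambda>a c. real a / real c) a c = r * (real a / real c) + (1 - r) / real n * (real a + (real n - real c) * (real a / real c))"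
    unfolding Phi_def of_nat_add of_nat_1 e by simp
  also have "\<dots> = real a / real c" using c by (simp add: field_simps)
  finally show ?thesis .
qed

lemma Phi_Q:
  assumes "1 \<le> c" "a \<le> c" "0 < n"
  shows "Phi r n (\<lambda>a c. Qv a c * f c) a c
     = Qv a c * (f c + (1 - r) * real c / real n * (f (Suc c) - f c))"
proof -
  have c: "real c > 0" "real n > 0" using assms by auto
  have e: "real a * Qv (a + 1) (c + 1) + (real c - real a) * Qv a (c + 1) = real c * Qv a c"
    unfolding Qv_def of_nat_add of_nat_1 by (rule aux_Q) (use c in simp)
  have "Phi r n (\<lambda>a c. Qv a c * f c) a c
      = r * (Qv a c * f c) + (1 - r) / real n *
        ((real a * Qv (a + 1) (c + 1) + (real c - real a) * Qv a (c + 1)) * f (c + 1) + (real n - real c) * (Qv a c * f c))"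
    unfolding Phi_def by (simp add: algebra_simps)
  also have "\<dots> = Qv a c * (f c + (1 - r) * real c / real n * (f (Suc c) - f c))"
    unfolding e using c by (simp add: field_simps)
  finally show ?thesis .
qed

lemma V_step:
  assumes k: "1 \<le> k" "k \<le> n" and r: "0 \<le> r" "r \<le> 1"
    and dg: "dep (n - 1) g" and bg: "\<And>\<omega>. \<bar>g \<omega>\<bar> \<le> Bg"
  shows "(\<integral>\<omega>. g \<omega> * Vf k (Suc n) \<omega> \<partial>yule_space r) = (\<integral>\<omega>. g \<omega> * Vf k n \<omega> \<partial>yule_space r)"
proof -
  have n: "1 \<le> n" using k by simp
  have "(\<integral>\<omega>. g \<omega> * Vf k (Suc n) \<omega> \<partial>yule_space r)
     = (\<integral>\<omega>. g \<omega> * (\<lambda>a c. real a / real c) (acnt k (Suc n) \<omega>) (cnt k (Suc n) \<omega>) \<partial>yule_space r)"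
    by (simp add: Vf_def)
  also have "\<dots> = (\<integral>\<omega>. g \<omega> * Phi r n (\<lambda>a c. real a / real c) (acnt k n \<omega>) (cnt k n \<omega>) \<partial>yule_space r)"
    by (rule step_G[OF n k(2) k(1) r dg bg])
  also have "\<dots> = (\<integral>\<omega>. g \<omega> * Vf k n \<omega> \<partial>yule_space r)"
  proof (rule Bochner_Integration.integral_cong[OF refl])
    fix \<omega>
    show "g \<omega> * Phi r n (\<lambda>a c. real a / real c) (acnt k n \<omega>) (cnt k n \<omega>) = g \<omega> * Vf k n \<omega>"
      using Phi_V[OF cnt_ge1[OF k(1) n] cnt_le acnt_le_cnt[OF k(1)]] n by (simp add: Vf_def)
  qed
  finally show ?thesis .
qed

lemma Q_step:
  assumes k: "1 \<le> k" "k \<le> n" and r: "0 \<le> r" "r \<le> 1"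
    and dg: "dep (n - 1) g" and bg: "\<And>\<omega>. \<bar>g \<omega>\<bar> \<le> Bg"
  shows "(\<integral>\<omega>. g \<omega> * (Qf k (Suc n) \<omega> * f (cnt k (Suc n) \<omega>)) \<partial>yule_space r)
    = (\<integral>\<omega>. g \<omega> * (Qf k n \<omega> * (f (cnt k n \<omega>) + (1 - r) * real (cnt k n \<omega>) / real n
          * (f (Suc (cnt k n \<omega>)) - f (cnt k n \<omega>)))) \<partial>yule_space r)" (is "_ = ?R")
proof -
  have n: "1 \<le> n" using k by simp
  have "(\<integral>\<omega>. g \<omega> * (Qf k (Suc n) \<omega> * f (cnt k (Suc n) \<omega>)) \<partial>yule_space r)
     = (\<integral>\<omega>. g \<omega> * (\<lambda>a c. Qv a c * f c) (acnt k (Suc n) \<omega>) (cnt k (Suc n) \<omega>) \<partial>yule_space r)"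
    by (simp add: Qf_def)
  also have "\<dots> = (\<integral>\<omega>. g \<omega> * Phi r n (\<lambda>a c. Qv a c * f c) (acnt k n \<omega>) (cnt k n \<omega>) \<partial>yule_space r)"
    by (rule step_G[OF n k(2) k(1) r dg bg])
  also have "\<dots> = ?R"
  proof (rule Bochner_Integration.integral_cong[OF refl])
    fix \<omega>
    show "g \<omega> * Phi r n (\<lambda>a c. Qv a c * f c) (acnt k n \<omega>) (cnt k n \<omega>) = g \<omega> * (Qf k n \<omega> * (f (cnt k n \<omega>) + (1 - r) * real (cnt k n \<omega>) / real n
          * (f (Suc (cnt k n \<omega>)) - f (cnt k n \<omega>))))"
      using Phi_Q[OF cnt_ge1[OF k(1) n] acnt_le_cnt[OF k(1)], of n r f] n by (simp add: Qf_def)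
  qed
  finally show ?thesis .
qed

lemma V_iter:
  assumes k: "1 \<le> k" "k \<le> n" "n \<le> m" and r: "0 \<le> r" "r \<le> 1"
    and dg: "dep (n - 1) g" and bg: "\<And>\<omega>. \<bar>g \<omega>\<bar> \<le> Bg"
  shows "(\<integral>\<omega>. g \<omega> * Vf k m \<omega> \<partial>yule_space r) = (\<integral>\<omega>. g \<omega> * Vf k n \<omega> \<partial>yule_space r)"
  using k(3)
proof (induction m rule: dec_induct)
  case base then show ?case by simp
next
  case (step m)
  have "(\<integral>\<omega>. g \<omega> * Vf k (Suc m) \<omega> \<partial>yule_space r) = (\<integral>\<omega>. g \<omega> * Vf k m \<omega> \<partial>yule_space r)"
    by (rule V_step[OF k(1) _ r dep_mono[OF dg] bg]) (use step k in auto)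
  then show ?case using step.IH by simp
qed

lemma Q_iter:
  assumes k: "1 \<le> k" "k \<le> n" "n \<le> m" and r: "0 \<le> r" "r \<le> 1"
    and dg: "dep (n - 1) g" and bg: "\<And>\<omega>. \<bar>g \<omega>\<bar> \<le> Bg"
  shows "(\<integral>\<omega>. g \<omega> * Qf k m \<omega> \<partial>yule_space r) = (\<integral>\<omega>. g \<omega> * Qf k n \<omega> \<partial>yule_space r)"
  using k(3)
proof (induction m rule: dec_induct)
  case base then show ?case by simp
next
  case (step m)
  have "(\<integral>\<omega>. g \<omega> * (Qf k (Suc m) \<omega> * (\<lambda>_. 1) (cnt k (Suc m) \<omega>)) \<partial>yule_space r)
     = (\<integral>\<omega>. g \<omega> * (Qf k m \<omega> * ((\<lambda>_. 1) (cnt k m \<omega>) + (1 - r) * real (cnt k m \<omega>) / real m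
          * ((\<lambda>_. 1) (Suc (cnt k m \<omega>)) - (\<lambda>_. 1) (cnt k m \<omega>)))) \<partial>yule_space r)"
    by (rule Q_step[OF k(1) _ r dep_mono[OF dg] bg]) (use step k in auto)
  then show ?case using step.IH by simp
qed

lemma abs_diff_01: "0 \<le> (x::real) \<and> x \<le> 1 \<Longrightarrow> 0 \<le> y \<and> y \<le> 1 \<Longrightarrow> \<bar>x - y\<bar> \<le> 1"
  by auto

lemma abs_mult_le1: "\<bar>x::real\<bar> \<le> 1 \<Longrightarrow> \<bar>y\<bar> \<le> 1 \<Longrightarrow> \<bar>x * y\<bar> \<le> 1"
  by (simp add: abs_mult mult_le_one)

lemma abs_ind: "\<bar>(if P then 1 else 0 :: real)\<bar> \<le> 1"
  by simp

lemma dep_pred_sets: "dep m (P :: _ \<Rightarrow> bool) \<Longrightarrow> {\<omega>. P \<omega>} \<in> sets (yule_space r)"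
proof -
  assume a: "dep m P"
  have "dep m (\<lambda>\<omega>. if P \<omega> then 1 else 0 :: real)" using dep_comp[OF a, of "\<lambda>b. if b then 1 else 0 :: real"] by simp
  then have "(\<lambda>\<omega>. if P \<omega> then 1 else 0 :: real) \<in> borel_measurable (yule_space r)" by (rule dep_meas_Y)
  then have "(\<lambda>\<omega>. if P \<omega> then 1 else 0 :: real) -` {1} \<inter> space (yule_space r) \<in> sets (yule_space r)"
    by (rule measurable_sets) simp
  moreover have "(\<lambda>\<omega>. if P \<omega> then 1 else 0 :: real) -` {1} \<inter> space (yule_space r) = {\<omega>. P \<omega>}" by (auto split: if_splits)
  ultimately show ?thesis by simp
qed

lemma prob_as_int: "{\<omega>. P \<omega>} \<in> sets (yule_space r) \<Longrightarrow>
   measure (yule_space r) {\<omega>. P \<omega>} = (\<integral>\<omega>. (if P \<omega> then 1 else 0) \<partial>yule_space r)"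
proof -
  have "(\<integral>\<omega>. (if P \<omega> then 1 else 0) \<partial>yule_space r) = (\<integral>\<omega>. indicator {\<omega>. P \<omega>} \<omega> \<partial>yule_space r)"
    by (rule Bochner_Integration.integral_cong) (auto simp: indicator_def)
  also have "\<dots> = measure (yule_space r) {\<omega>. P \<omega>}" by simp
  finally show ?thesis by simp
qed

lemma mart_conv:
  fixes U :: "nat \<Rightarrow> (nat \<Rightarrow> nat \<times> bool) \<Rightarrow> real" and d :: "nat \<Rightarrow> nat"
  assumes md: "mono d"
    and dU: "\<And>i. dep (d i) (U i)"
    and bU: "\<And>i \<omega>. 0 \<le> U i \<omega> \<and> U i \<omega> \<le> 1"
    and mart: "\<And>i g Bg. dep (d i) g \<Longrightarrow> (\<And>\<omega>. \<bar>g \<omega>\<bar> \<le> Bg) \<Longrightarrow>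
       (\<integral>\<omega>. g \<omega> * U (Suc i) \<omega> \<partial>yule_space r) = (\<integral>\<omega>. g \<omega> * U i \<omega> \<partial>yule_space r)"
  shows "AE \<omega> in yule_space r. convergent (\<lambda>i. U i \<omega>)"
proof -
  let ?M = "yule_space r"
  interpret P: prob_space ?M by (rule prob_Y)
  have dU': "dep (d j) (U i)" if "i \<le> j" for i j
    using dep_mono[OF dU] md that by (simp add: mono_def)
  have intg: "integrable ?M f" if "dep m f" "\<And>\<omega>. \<bar>f \<omega>\<bar> \<le> 1" for f :: "_ \<Rightarrow> real" and m
    by (rule dep_integrable[OF that(1)]) (rule that(2))
  have absU: "\<bar>U i \<omega>\<bar> \<le> 1" for i \<omega> using bU[of i \<omega>] by auto
  have mart_iter: "(\<integral>\<omega>. g \<omega> * U j \<omega> \<partial>?M) = (\<integral>\<omega>. g \<omega> * U i \<omega> \<partial>?M)"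
    if "i \<le> j" "dep (d i) g" "\<And>\<omega>. \<bar>g \<omega>\<bar> \<le> Bg" for i j g Bg
    using that(1)
  proof (induction j rule: dec_induct)
    case base then show ?case by simp
  next
    case (step j)
    have "dep (d j) g" using dep_mono[OF that(2)] md step by (simp add: mono_def)
    then show ?case using mart[OF _ that(3)] step.IH by simp
  qed
  define s where "s i = (\<integral>\<omega>. (U i \<omega>)\<^sup>2 \<partial>?M)" for i
  have orth: "(\<integral>\<omega>. (U j \<omega> - U i \<omega>)\<^sup>2 \<partial>?M) = s j - s i" if "i \<le> j" for i j
  proof -
    have cross: "(\<integral>\<omega>. U i \<omega> * U j \<omega> \<partial>?M) = (\<integral>\<omega>. U i \<omega> * U i \<omega> \<partial>?M)"
      by (rule mart_iter[OF that dU absU])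
    have sq: "integrable ?M (\<lambda>\<omega>. (U l \<omega>)\<^sup>2)" for l
      by (rule intg[OF dep_comp[OF dU[of l], of "\<lambda>x. x\<^sup>2"]]) (use bU in \<open>simp add: power_le_one\<close>)
    have pr: "integrable ?M (\<lambda>\<omega>. U i \<omega> * U l \<omega>)" if "i \<le> l" for l
      by (rule intg[OF dep_comp2[OF dU'[OF that] dU'[of l l, OF order.refl], of "(*)"]])
         (use bU in \<open>simp add: abs_mult mult_le_one\<close>)
    have i1: "integrable ?M (\<lambda>\<omega>. (U j \<omega>)\<^sup>2)" "integrable ?M (\<lambda>\<omega>. (U i \<omega>)\<^sup>2)"
      "integrable ?M (\<lambda>\<omega>. U i \<omega> * U j \<omega>)"
      using sq pr[OF that] by auto
    have "(\<integral>\<omega>. (U j \<omega> - U i \<omega>)\<^sup>2 \<partial>?M) = (\<integral>\<omega>. (U j \<omega>)\<^sup>2 - 2 * (U i \<omega> * U j \<omega>) + (U i \<omega>)\<^sup>2 \<partial>?M)"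
      by (rule Bochner_Integration.integral_cong) (auto simp: power2_eq_square algebra_simps)
    also have "\<dots> = s j - 2 * (\<integral>\<omega>. U i \<omega> * U j \<omega> \<partial>?M) + s i"
      using i1 by (simp add: s_def)
    also have "\<dots> = s j - s i"
      using cross by (simp add: s_def power2_eq_square)
    finally show ?thesis .
  qed
  define B where "B t i j \<omega> \<longleftrightarrow> (\<exists>l. i \<le> l \<and> l \<le> j \<and> t < \<bar>U l \<omega> - U i \<omega>\<bar>)"
    for t :: real and i j \<omega>
  have depI': "dep (d m) f"
    if "\<And>\<omega> \<omega>'. (\<And>l. l \<le> m \<Longrightarrow> U l \<omega> = U l \<omega>') \<Longrightarrow> f \<omega> = f \<omega>'" for m and f :: "_ \<Rightarrow> 'z"
    unfolding dep_def
  proof (intro allI impI)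
    fix \<omega> \<omega>' :: "nat \<Rightarrow> nat \<times> bool" assume a: "\<forall>i<d m. \<omega> i = \<omega>' i"
    show "f \<omega> = f \<omega>'"
      by (rule that) (rule depD[OF dU'], assumption, use a in auto)
  qed
  have agreeB: "B t i n \<omega> = B t i n \<omega>'"
    if "\<And>l. l \<le> m \<Longrightarrow> U l \<omega> = U l \<omega>'" "n \<le> m" "i \<le> n" for t i n m \<omega> \<omega>'
  proof -
    have "U l \<omega> = U l \<omega>'" if "l \<le> n" for l using that \<open>n \<le> m\<close> \<open>\<And>l. l \<le> m \<Longrightarrow> U l \<omega> = U l \<omega>'\<close> by simp
    then show ?thesis unfolding B_def using \<open>i \<le> n\<close> by (metis order.trans)
  qed
  have ind1: "\<bar>(if P then 1 else 0 :: real)\<bar> \<le> 1" for P by simp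
  have sqd1: "\<bar>(U a \<omega> - U b \<omega>)\<^sup>2\<bar> \<le> 1" for a b \<omega>
  proof -
    have "\<bar>U a \<omega> - U b \<omega>\<bar> \<le> 1" by (rule abs_diff_01[OF bU bU])
    then show ?thesis by (simp add: abs_square_le_1)
  qed
  have doob: "t\<^sup>2 * (\<integral>\<omega>. (if B t i j \<omega> then 1 else 0) \<partial>?M)
      \<le> (\<integral>\<omega>. (U j \<omega> - U i \<omega>)\<^sup>2 * (if B t i j \<omega> then 1 else 0) \<partial>?M)"
    if "0 < t" "i \<le> j" for t i j
    using that(2)
  proof (induction j rule: dec_induct)
    case base
    have "\<not> B t i i \<omega>" for \<omega> unfolding B_def using that(1) by auto
    then show ?case by simp
  next
    case (step n)
    let ?b = "\<lambda>\<omega>. (if B t i n \<omega> then 1 else 0 :: real)"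
    let ?a = "\<lambda>\<omega>. (if \<not> B t i n \<omega> \<and> t < \<bar>U (Suc n) \<omega> - U i \<omega>\<bar> then 1 else 0 :: real)"
    have gdep: "dep (d (Suc n)) (\<lambda>\<omega>. F (U i \<omega>) (U n \<omega>) (U (Suc n) \<omega>) (B t i n \<omega>))"
      for F :: "real \<Rightarrow> real \<Rightarrow> real \<Rightarrow> bool \<Rightarrow> real"
    proof (rule depI')
      fix \<omega> \<omega>' :: "nat \<Rightarrow> nat \<times> bool" assume A: "\<And>l. l \<le> Suc n \<Longrightarrow> U l \<omega> = U l \<omega>'"
      have "B t i n \<omega> = B t i n \<omega>'" by (rule agreeB[OF A]) (use step(1) in auto)
      then show "F (U i \<omega>) (U n \<omega>) (U (Suc n) \<omega>) (B t i n \<omega>) = F (U i \<omega>') (U n \<omega>') (U (Suc n) \<omega>') (B t i n \<omega>')"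
        using A[of i] A[of n] A[of "Suc n"] step(1) by simp
    qed
    have gdep0: "dep (d n) (\<lambda>\<omega>. F (U i \<omega>) (U n \<omega>) (B t i n \<omega>))"
      for F :: "real \<Rightarrow> real \<Rightarrow> bool \<Rightarrow> real"
    proof (rule depI')
      fix \<omega> \<omega>' :: "nat \<Rightarrow> nat \<times> bool" assume A: "\<And>l. l \<le> n \<Longrightarrow> U l \<omega> = U l \<omega>'"
      have "B t i n \<omega> = B t i n \<omega>'" by (rule agreeB[OF A]) (use step(1) in auto)
      then show "F (U i \<omega>) (U n \<omega>) (B t i n \<omega>) = F (U i \<omega>') (U n \<omega>') (B t i n \<omega>')"
        using A[of i] A[of n] step(1) by simp
    qed
    have splitB: "(if B t i (Suc n) \<omega> then 1 else 0 :: real) = ?b \<omega> + ?a \<omega>" for \<omega>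
    proof -
      have "B t i (Suc n) \<omega> \<longleftrightarrow> B t i n \<omega> \<or> t < \<bar>U (Suc n) \<omega> - U i \<omega>\<bar>"
        using step(1) unfolding B_def le_Suc_eq by (blast intro: le_SucI)
      then show ?thesis by auto
    qed
    have I: "integrable ?M f" if "dep (d (Suc n)) f" "\<And>\<omega>. \<bar>f \<omega>\<bar> \<le> C" for f :: "_ \<Rightarrow> real" and C
      by (rule dep_integrable[OF that(1)]) (rule that(2))
    have b01: "\<bar>U a \<omega> - U b \<omega>\<bar> \<le> 1" for a b \<omega> by (rule abs_diff_01[OF bU bU])
    have i1: "integrable ?M (\<lambda>\<omega>. (U n \<omega> - U i \<omega>)\<^sup>2 * ?b \<omega>)"
      by (rule I[OF gdep[of "\<lambda>x y z p. (y - x)\<^sup>2 * (if p then 1 else 0)"], of 1])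
         (use sqd1 in \<open>simp add: abs_mult\<close>)
    have i2: "integrable ?M (\<lambda>\<omega>. (U (Suc n) \<omega> - U n \<omega>)\<^sup>2 * ?b \<omega>)"
      by (rule I[OF gdep[of "\<lambda>x y z p. (z - y)\<^sup>2 * (if p then 1 else 0)"], of 1])
         (use sqd1 in \<open>simp add: abs_mult\<close>)
    have i3: "integrable ?M (\<lambda>\<omega>. ((U n \<omega> - U i \<omega>) * ?b \<omega>) * U (Suc n) \<omega>)"
      by (rule I[OF gdep[of "\<lambda>x y z p. ((y - x) * (if p then 1 else 0)) * z"], of 1])
         (use b01 absU in \<open>simp add: abs_mult mult_le_one\<close>)
    have i4: "integrable ?M (\<lambda>\<omega>. ((U n \<omega> - U i \<omega>) * ?b \<omega>) * U n \<omega>)"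
      by (rule I[OF gdep[of "\<lambda>x y z p. ((y - x) * (if p then 1 else 0)) * y"], of 1])
         (use b01 absU in \<open>simp add: abs_mult mult_le_one\<close>)
    have i6: "integrable ?M (\<lambda>\<omega>. (U (Suc n) \<omega> - U i \<omega>)\<^sup>2 * ?a \<omega>)"
      by (rule I[OF gdep[of "\<lambda>x y z p. (z - x)\<^sup>2 * (if \<not> p \<and> t < \<bar>z - x\<bar> then 1 else 0)"], of 1])
         (use sqd1 in \<open>simp add: abs_mult\<close>)
    have i7: "integrable ?M ?b"
      by (rule I[OF gdep[of "\<lambda>x y z p. (if p then 1 else 0)"], of 1]) simp
    have i8: "integrable ?M ?a"
      by (rule I[OF gdep[of "\<lambda>x y z p. (if \<not> p \<and> t < \<bar>z - x\<bar> then 1 else 0)"], of 1]) simp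
    have mh: "(\<integral>\<omega>. ((U n \<omega> - U i \<omega>) * ?b \<omega>) * U (Suc n) \<omega> \<partial>?M) = (\<integral>\<omega>. ((U n \<omega> - U i \<omega>) * ?b \<omega>) * U n \<omega> \<partial>?M)"
      by (rule mart[OF gdep0[of "\<lambda>x y p. (y - x) * (if p then 1 else 0)"], where Bg=1])
         (use b01 in \<open>simp add: abs_mult\<close>)
    have e5: "(\<integral>\<omega>. (U (Suc n) \<omega> - U i \<omega>)\<^sup>2 * ?b \<omega> \<partial>?M)
      = (\<integral>\<omega>. (U n \<omega> - U i \<omega>)\<^sup>2 * ?b \<omega> + (U (Suc n) \<omega> - U n \<omega>)\<^sup>2 * ?b \<omega>
         + 2 * (((U n \<omega> - U i \<omega>) * ?b \<omega>) * U (Suc n) \<omega> - ((U n \<omega> - U i \<omega>) * ?b \<omega>) * U n \<omega>) \<partial>?M)"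
      by (rule Bochner_Integration.integral_cong) (auto simp: power2_eq_square algebra_simps)
    also have "\<dots> = (\<integral>\<omega>. (U n \<omega> - U i \<omega>)\<^sup>2 * ?b \<omega> \<partial>?M) + (\<integral>\<omega>. (U (Suc n) \<omega> - U n \<omega>)\<^sup>2 * ?b \<omega> \<partial>?M)
         + 2 * ((\<integral>\<omega>. ((U n \<omega> - U i \<omega>) * ?b \<omega>) * U (Suc n) \<omega> \<partial>?M) - (\<integral>\<omega>. ((U n \<omega> - U i \<omega>) * ?b \<omega>) * U n \<omega> \<partial>?M))"
      using i1 i2 i3 i4 by simp
    also have "\<dots> = (\<integral>\<omega>. (U n \<omega> - U i \<omega>)\<^sup>2 * ?b \<omega> \<partial>?M) + (\<integral>\<omega>. (U (Suc n) \<omega> - U n \<omega>)\<^sup>2 * ?b \<omega> \<partial>?M)"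
      using mh by simp
    also have "\<dots> \<ge> (\<integral>\<omega>. (U n \<omega> - U i \<omega>)\<^sup>2 * ?b \<omega> \<partial>?M)"
    proof -
      have "0 \<le> (\<integral>\<omega>. (U (Suc n) \<omega> - U n \<omega>)\<^sup>2 * ?b \<omega> \<partial>?M)"
        by (rule Bochner_Integration.integral_nonneg) simp
      then show ?thesis by simp
    qed
    finally have c1: "(\<integral>\<omega>. (U n \<omega> - U i \<omega>)\<^sup>2 * ?b \<omega> \<partial>?M) \<le> (\<integral>\<omega>. (U (Suc n) \<omega> - U i \<omega>)\<^sup>2 * ?b \<omega> \<partial>?M)" .
    have c2: "(\<integral>\<omega>. t\<^sup>2 * ?a \<omega> \<partial>?M) \<le> (\<integral>\<omega>. (U (Suc n) \<omega> - U i \<omega>)\<^sup>2 * ?a \<omega> \<partial>?M)"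
    proof (rule integral_mono)
      show "integrable ?M (\<lambda>\<omega>. t\<^sup>2 * ?a \<omega>)" using i8 by simp
      show "integrable ?M (\<lambda>\<omega>. (U (Suc n) \<omega> - U i \<omega>)\<^sup>2 * ?a \<omega>)" by (rule i6)
      fix \<omega>
      show "t\<^sup>2 * ?a \<omega> \<le> (U (Suc n) \<omega> - U i \<omega>)\<^sup>2 * ?a \<omega>"
      proof (cases "\<not> B t i n \<omega> \<and> t < \<bar>U (Suc n) \<omega> - U i \<omega>\<bar>")
        case True
        then have "t\<^sup>2 \<le> (\<bar>U (Suc n) \<omega> - U i \<omega>\<bar>)\<^sup>2" using that(1) by (intro power_mono) auto
        then show ?thesis using True by simp
      next
        case False then show ?thesis by auto
      qed
    qed
    have lhs: "t\<^sup>2 * (\<integral>\<omega>. (if B t i (Suc n) \<omega> then 1 else 0) \<partial>?M) = t\<^sup>2 * (\<integral>\<omega>. ?b \<omega> \<partial>?M) + (\<integral>\<omega>. t\<^sup>2 * ?a \<omega> \<partial>?M)"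
    proof -
      have "(\<integral>\<omega>. (if B t i (Suc n) \<omega> then 1 else 0) \<partial>?M) = (\<integral>\<omega>. ?b \<omega> + ?a \<omega> \<partial>?M)"
        by (rule Bochner_Integration.integral_cong[OF refl]) (rule splitB)
      also have "\<dots> = (\<integral>\<omega>. ?b \<omega> \<partial>?M) + (\<integral>\<omega>. ?a \<omega> \<partial>?M)"
        by (rule Bochner_Integration.integral_add[OF i7 i8])
      finally show ?thesis by (simp add: distrib_left)
    qed
    have rhs: "(\<integral>\<omega>. (U (Suc n) \<omega> - U i \<omega>)\<^sup>2 * (if B t i (Suc n) \<omega> then 1 else 0) \<partial>?M)
       = (\<integral>\<omega>. (U (Suc n) \<omega> - U i \<omega>)\<^sup>2 * ?b \<omega> \<partial>?M) + (\<integral>\<omega>. (U (Suc n) \<omega> - U i \<omega>)\<^sup>2 * ?a \<omega> \<partial>?M)"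
    proof -
      have i5: "integrable ?M (\<lambda>\<omega>. (U (Suc n) \<omega> - U i \<omega>)\<^sup>2 * ?b \<omega>)"
        by (rule I[OF gdep[of "\<lambda>x y z p. (z - x)\<^sup>2 * (if p then 1 else 0)"], of 1])
           (use sqd1 in \<open>simp add: abs_mult\<close>)
      have "(\<integral>\<omega>. (U (Suc n) \<omega> - U i \<omega>)\<^sup>2 * (if B t i (Suc n) \<omega> then 1 else 0) \<partial>?M)
         = (\<integral>\<omega>. (U (Suc n) \<omega> - U i \<omega>)\<^sup>2 * ?b \<omega> + (U (Suc n) \<omega> - U i \<omega>)\<^sup>2 * ?a \<omega> \<partial>?M)"
        by (rule Bochner_Integration.integral_cong[OF refl]) (simp only: splitB distrib_left)
      also have "\<dots> = (\<integral>\<omega>. (U (Suc n) \<omega> - U i \<omega>)\<^sup>2 * ?b \<omega> \<partial>?M) + (\<integral>\<omega>. (U (Suc n) \<omega> - U i \<omega>)\<^sup>2 * ?a \<omega> \<partial>?M)"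
        by (rule Bochner_Integration.integral_add[OF i5 i6])
      finally show ?thesis .
    qed
    show ?case unfolding lhs rhs using step.IH c1 c2 by simp
  qed
  have sint: "integrable ?M (\<lambda>\<omega>. (U l \<omega>)\<^sup>2)" for l
    by (rule intg[OF dep_comp[OF dU[of l], of "\<lambda>x. x\<^sup>2"]]) (use bU in \<open>simp add: power_le_one\<close>)
  have sinc: "s i \<le> s (Suc i)" for i
  proof -
    have "0 \<le> (\<integral>\<omega>. (U (Suc i) \<omega> - U i \<omega>)\<^sup>2 \<partial>?M)" by (rule Bochner_Integration.integral_nonneg) simp
    then show ?thesis using orth[of i "Suc i"] by simp
  qed
  have sb: "s i \<le> 1" for i
  proof -
    have "s i \<le> (\<integral>\<omega>. 1 \<partial>?M)" unfolding s_def
      by (rule integral_mono[OF sint]) (use bU in \<open>auto simp: power_le_one\<close>)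
    then show ?thesis using P.prob_space by simp
  qed
  obtain L where sL: "s \<longlonglongrightarrow> L" "\<And>i. s i \<le> L"
    using incseq_convergent[of s 1] sinc sb by (metis incseq_SucI)
  have depB: "dep (d j) (\<lambda>\<omega>. F (B t i j \<omega>) (U i \<omega>) (U j \<omega>))" if "i \<le> j"
    for t i j and F :: "bool \<Rightarrow> real \<Rightarrow> real \<Rightarrow> real"
  proof (rule depI')
    fix \<omega> \<omega>' :: "nat \<Rightarrow> nat \<times> bool" assume A: "\<And>l. l \<le> j \<Longrightarrow> U l \<omega> = U l \<omega>'"
    have "B t i j \<omega> = B t i j \<omega>'" by (rule agreeB[OF A]) (use that in auto)
    then show "F (B t i j \<omega>) (U i \<omega>) (U j \<omega>) = F (B t i j \<omega>') (U i \<omega>') (U j \<omega>')"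
      using A[of i] A[of j] that by simp
  qed
  have mB: "{\<omega>. B t i j \<omega>} \<in> sets ?M" if "i \<le> j" for t i j
  proof -
    have "dep (d j) (\<lambda>\<omega>. B t i j \<omega>)"
      unfolding dep_def using depD[OF depB[of i j "\<lambda>p x y. if p then 1 else 0" t, OF that]]
      by (metis one_neq_zero)
    then show ?thesis by (rule dep_pred_sets)
  qed
  have pB: "measure ?M {\<omega>. B t i j \<omega>} \<le> (L - s i) / t\<^sup>2" if "0 < t" "i \<le> j" for t i j
  proof -
    have "t\<^sup>2 * measure ?M {\<omega>. B t i j \<omega>} = t\<^sup>2 * (\<integral>\<omega>. (if B t i j \<omega> then 1 else 0) \<partial>?M)"
      using prob_as_int[OF mB[OF that(2)]] by simp
    also have "\<dots> \<le> (\<integral>\<omega>. (U j \<omega> - U i \<omega>)\<^sup>2 * (if B t i j \<omega> then 1 else 0) \<partial>?M)"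
      by (rule doob[OF that])
    also have "\<dots> \<le> (\<integral>\<omega>. (U j \<omega> - U i \<omega>)\<^sup>2 \<partial>?M)"
    proof (rule integral_mono)
      show "integrable ?M (\<lambda>\<omega>. (U j \<omega> - U i \<omega>)\<^sup>2 * (if B t i j \<omega> then 1 else 0))"
        by (rule intg[OF depB[of i j "\<lambda>p x y. (y - x)\<^sup>2 * (if p then 1 else 0)" t, OF that(2)]])
           (use sqd1 in \<open>simp add: abs_mult\<close>)
      show "integrable ?M (\<lambda>\<omega>. (U j \<omega> - U i \<omega>)\<^sup>2)"
        by (rule intg[OF depB[of i j "\<lambda>p x y. (y - x)\<^sup>2" t, OF that(2)]]) (use sqd1 in simp)
    qed auto
    also have "\<dots> = s j - s i" by (rule orth[OF that(2)])
    also have "\<dots> \<le> L - s i" using sL(2)[of j] by simp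
    finally have "t\<^sup>2 * measure ?M {\<omega>. B t i j \<omega>} \<le> L - s i" .
    then show ?thesis using that(1) by (simp add: field_simps)
  qed
  have Bmono: "B t i j \<omega> \<Longrightarrow> j \<le> j' \<Longrightarrow> B t i j' \<omega>" for t i j j' \<omega>
    unfolding B_def by (meson order.trans)
  have pC: "measure ?M (\<Union>m. {\<omega>. B t i (i + m) \<omega>}) \<le> (L - s i) / t\<^sup>2" if "0 < t" for t i
  proof -
    have "(\<lambda>m. measure ?M {\<omega>. B t i (i + m) \<omega>}) \<longlonglongrightarrow> measure ?M (\<Union>m. {\<omega>. B t i (i + m) \<omega>})"
    proof (rule P.finite_Lim_measure_incseq)
      show "range (\<lambda>m. {\<omega>. B t i (i + m) \<omega>}) \<subseteq> sets ?M" using mB by auto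
      show "incseq (\<lambda>m. {\<omega>. B t i (i + m) \<omega>})"
        unfolding incseq_def using Bmono by auto
    qed
    then show ?thesis
      by (rule LIMSEQ_le_const2) (use pB[OF that] in auto)
  qed
  define D where "D t = (\<Inter>n. \<Union>m. {\<omega>. B t n (n + m) \<omega>})" for t
  have mD: "D t \<in> sets ?M" for t
    unfolding D_def using mB by (intro sets.countable_INT sets.countable_UN) auto
  have D0: "measure ?M (D t) = 0" if "0 < t" for t
  proof -
    have le: "measure ?M (D t) \<le> (L - s n) / t\<^sup>2" for n
    proof -
      have "measure ?M (D t) \<le> measure ?M (\<Union>m. {\<omega>. B t n (n + m) \<omega>})"
        by (rule P.finite_measure_mono) (use mB in \<open>auto simp: D_def\<close>)
      then show ?thesis using pC[OF that, of n] by simp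
    qed
    have "(\<lambda>n. (L - s n) / t\<^sup>2) \<longlonglongrightarrow> 0"
    proof -
      have "(\<lambda>n. L - s n) \<longlonglongrightarrow> L - L" by (rule tendsto_diff[OF tendsto_const sL(1)])
      then have "(\<lambda>n. L - s n) \<longlonglongrightarrow> 0" by simp
      then show ?thesis by (rule tendsto_divide_zero)
    qed
    then have "measure ?M (D t) \<le> 0"
      by (rule LIMSEQ_le_const) (use le in auto)
    then show ?thesis by (simp add: measure_nonneg antisym)
  qed
  have AED: "AE \<omega> in ?M. \<forall>j. \<omega> \<notin> D (1 / real (Suc j))"
  proof (subst AE_all_countable, intro allI)
    fix j
    have "D (1 / real (Suc j)) \<in> null_sets ?M"
      using D0[of "1 / real (Suc j)"] mD by (intro null_setsI) (auto simp: P.emeasure_eq_measure)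
    then show "AE \<omega> in ?M. \<omega> \<notin> D (1 / real (Suc j))" by (rule AE_not_in)
  qed
  show ?thesis
  proof (rule AE_mp[OF AED], rule AE_I2, intro impI)
    fix \<omega> assume nD: "\<forall>j. \<omega> \<notin> D (1 / real (Suc j))"
    have near: "\<exists>n. \<forall>l\<ge>n. \<bar>U l \<omega> - U n \<omega>\<bar> \<le> 1 / real (Suc j)" for j
    proof -
      from nD obtain n where "\<omega> \<notin> (\<Union>m. {\<omega>. B (1 / real (Suc j)) n (n + m) \<omega>})"
        unfolding D_def by auto
      then have "\<not> B (1 / real (Suc j)) n (n + m) \<omega>" for m by auto
      then have "\<bar>U l \<omega> - U n \<omega>\<bar> \<le> 1 / real (Suc j)" if "n \<le> l" for l
        using that unfolding B_def
        by (metis le_add_diff_inverse linorder_not_less order_refl)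
      then show ?thesis by blast
    qed
    have "Cauchy (\<lambda>i. U i \<omega>)"
    proof (rule CauchyI)
      fix e :: real assume e: "0 < e"
      obtain N :: nat where N: "N > 0" "inverse (real N) < e / 2"
        using ex_inverse_of_nat_less[of "e / 2"] e by auto
      obtain n where n: "\<forall>l\<ge>n. \<bar>U l \<omega> - U n \<omega>\<bar> \<le> 1 / real (Suc (N - 1))"
        using near by blast
      have SN: "1 / real (Suc (N - 1)) < e / 2" using N by (simp add: inverse_eq_divide)
      show "\<exists>M. \<forall>m\<ge>M. \<forall>na\<ge>M. norm (U m \<omega> - U na \<omega>) < e"
      proof (intro exI allI impI)
        fix m na assume "n \<le> m" "n \<le> na"
        then have "\<bar>U m \<omega> - U n \<omega>\<bar> < e / 2" "\<bar>U na \<omega> - U n \<omega>\<bar> < e / 2" using n SN by force+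
        then show "norm (U m \<omega> - U na \<omega>) < e" unfolding real_norm_def by arith
      qed
    qed
    then show "convergent (\<lambda>i. U i \<omega>)" by (simp add: Cauchy_convergent_iff)
  qed
qed

lemma V_conv:
  assumes k: "1 \<le> k" and r: "0 \<le> r" "r \<le> 1"
  shows "AE \<omega> in yule_space r. (\<lambda>n. Vf k n \<omega>) \<longlonglongrightarrow> Wlim k \<omega>"
proof -
  have "AE \<omega> in yule_space r. convergent (\<lambda>i. Vf k (k + i) \<omega>)"
  proof (rule mart_conv[where d="\<lambda>i. k + i - 1"])
    show "mono (\<lambda>i. k + i - 1)" by (auto simp: mono_def)
    show "dep (k + i - 1) (Vf k (k + i))" for i using dep_Vf[of "k + i" k] by simp
    show "0 \<le> Vf k (k + i) \<omega> \<and> Vf k (k + i) \<omega> \<le> 1" for i \<omega> using Vf_bounds[OF k] by blast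
    show "(\<integral>\<omega>. g \<omega> * Vf k (k + Suc i) \<omega> \<partial>yule_space r) = (\<integral>\<omega>. g \<omega> * Vf k (k + i) \<omega> \<partial>yule_space r)"
      if "dep (k + i - 1) g" "\<And>\<omega>. \<bar>g \<omega>\<bar> \<le> Bg" for i g Bg
      using V_step[OF k _ r, of "k + i" g Bg] that by simp
  qed
  then show ?thesis
  proof (rule AE_mp, intro AE_I2 impI)
    fix \<omega> assume "convergent (\<lambda>i. Vf k (k + i) \<omega>)"
    then have c: "convergent (\<lambda>n. Vf k n \<omega>)"
      using convergent_ignore_initial_segment[of "\<lambda>n. Vf k n \<omega>" k] by (simp add: add.commute)
    have "Wlim k \<omega> = lim (\<lambda>n. Vf k n \<omega>)" by (simp add: Wlim_def Vf_eq)
    then show "(\<lambda>n. Vf k n \<omega>) \<longlonglongrightarrow> Wlim k \<omega>" using c by (simp add: convergent_LIMSEQ_iff)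
  qed
qed

lemma Wlim_meas: "Wlim k \<in> borel_measurable (yule_space r)"
proof -
  have "(\<lambda>\<omega>. lim (\<lambda>i. Vfrac k i \<omega>)) \<in> borel_measurable (yule_space r)"
  proof (rule borel_measurable_lim_metric)
    fix i show "Vfrac k i \<in> borel_measurable (yule_space r)"
      using dep_meas_Y[OF dep_Vf[of i k]] by (simp add: Vf_eq[abs_def])
  qed
  then show ?thesis by (simp add: Wlim_def[abs_def])
qed

lemma Xfrac_eq: "Xfrac k N \<omega> = real (cnt k N \<omega>) / real N"
  by (simp add: Xfrac_def cnt_def)

lemma per_k_cheb:
  assumes k: "1 \<le> k" "k \<le> N" and r: "0 \<le> r" "r \<le> 1" and eps: "0 < \<epsilon>"
  defines "Y \<equiv> \<lambda>\<omega>. Xfrac k N \<omega> - (real k / real N) powr r"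
  shows "measure (yule_space r) {\<omega> \<in> space (yule_space r). \<bar>Wlim k \<omega> * Y \<omega>\<bar> > \<epsilon>}
     \<le> (\<integral>\<omega>. (Y \<omega>)\<^sup>2 * Qf k N \<omega> \<partial>yule_space r) / \<epsilon>\<^sup>2"
proof -
  let ?M = "yule_space r"
  interpret P: prob_space ?M by (rule prob_Y)
  have N: "1 \<le> N" using k by simp
  have dY: "dep (N - 1) Y"
  proof -
    have "dep (N - 1) (\<lambda>\<omega>. real (cnt k N \<omega>) / real N - (real k / real N) powr r)"
      using dep_comp[OF dep_cnt[of N k], of "\<lambda>c. real c / real N - (real k / real N) powr r"] by simp
    then show ?thesis unfolding Y_def Xfrac_eq .
  qed
  have bY: "\<bar>Y \<omega>\<bar> \<le> 1" for \<omega>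
  proof -
    have "0 \<le> real (cnt k N \<omega>) / real N" "real (cnt k N \<omega>) / real N \<le> 1"
      using cnt_le[of k N \<omega>] N by (auto simp: divide_le_eq_1)
    moreover have "0 \<le> (real k / real N) powr r" "(real k / real N) powr r \<le> 1"
      using k r by (auto intro!: powr_le1 simp: divide_le_eq_1)
    ultimately show ?thesis unfolding Y_def Xfrac_eq by (intro abs_diff_01) auto
  qed
  have Ym: "Y \<in> borel_measurable ?M" by (rule dep_meas_Y[OF dY])
  have Wlim: "AE \<omega> in ?M. (\<lambda>n. Vf k n \<omega>) \<longlonglongrightarrow> Wlim k \<omega>" by (rule V_conv[OF k(1) r])
  have Wb: "AE \<omega> in ?M. \<bar>Wlim k \<omega>\<bar> \<le> 1"
  proof (rule AE_mp[OF Wlim], intro AE_I2 impI)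
    fix \<omega> assume l: "(\<lambda>n. Vf k n \<omega>) \<longlonglongrightarrow> Wlim k \<omega>"
    have "Wlim k \<omega> \<le> 1" by (rule LIMSEQ_le_const2[OF l]) (use Vf_bounds[OF k(1)] in auto)
    moreover have "0 \<le> Wlim k \<omega>" by (rule LIMSEQ_le_const[OF l]) (use Vf_bounds[OF k(1)] in auto)
    ultimately show "\<bar>Wlim k \<omega>\<bar> \<le> 1" by simp
  qed
  have fm: "(\<lambda>\<omega>. (Wlim k \<omega>)\<^sup>2 * (Y \<omega>)\<^sup>2) \<in> borel_measurable ?M"
    using Wlim_meas Ym by measurable
  have fint: "integrable ?M (\<lambda>\<omega>. (Wlim k \<omega>)\<^sup>2 * (Y \<omega>)\<^sup>2)"
  proof (rule P.integrable_const_bound[where B=1])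
    show "AE \<omega> in ?M. norm ((Wlim k \<omega>)\<^sup>2 * (Y \<omega>)\<^sup>2) \<le> 1"
    proof (rule AE_mp[OF Wb], intro AE_I2 impI)
      fix \<omega> assume "\<bar>Wlim k \<omega>\<bar> \<le> 1"
      then have "(Wlim k \<omega>)\<^sup>2 \<le> 1" "(Y \<omega>)\<^sup>2 \<le> 1" using bY[of \<omega>] by (auto simp: abs_square_le_1)
      then show "norm ((Wlim k \<omega>)\<^sup>2 * (Y \<omega>)\<^sup>2) \<le> 1" by (simp add: mult_le_one)
    qed
  qed (rule fm)
  have step1: "measure ?M {\<omega> \<in> space ?M. \<bar>Wlim k \<omega> * Y \<omega>\<bar> > \<epsilon>}
      \<le> measure ?M {\<omega> \<in> space ?M. (Wlim k \<omega>)\<^sup>2 * (Y \<omega>)\<^sup>2 \<ge> \<epsilon>\<^sup>2}"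
  proof (rule P.finite_measure_mono)
    show "{\<omega> \<in> space ?M. (Wlim k \<omega>)\<^sup>2 * (Y \<omega>)\<^sup>2 \<ge> \<epsilon>\<^sup>2} \<in> sets ?M" using fm by measurable
    show "{\<omega> \<in> space ?M. \<bar>Wlim k \<omega> * Y \<omega>\<bar> > \<epsilon>} \<subseteq> {\<omega> \<in> space ?M. (Wlim k \<omega>)\<^sup>2 * (Y \<omega>)\<^sup>2 \<ge> \<epsilon>\<^sup>2}"
    proof safe
      fix \<omega> assume "\<bar>Wlim k \<omega> * Y \<omega>\<bar> > \<epsilon>"
      then have "\<epsilon>\<^sup>2 \<le> (\<bar>Wlim k \<omega> * Y \<omega>\<bar>)\<^sup>2" using eps by (intro power_mono) auto
      then show "(Wlim k \<omega>)\<^sup>2 * (Y \<omega>)\<^sup>2 \<ge> \<epsilon>\<^sup>2" by (simp add: power_mult_distrib)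
    qed
  qed
  also have "\<dots> \<le> (\<integral>\<omega>. (Wlim k \<omega>)\<^sup>2 * (Y \<omega>)\<^sup>2 \<partial>?M) / \<epsilon>\<^sup>2"
    by (rule integral_Markov_inequality_measure[OF fint, where A="space ?M"]) (use eps sets.top[of ?M] in auto)
  also have "(\<integral>\<omega>. (Wlim k \<omega>)\<^sup>2 * (Y \<omega>)\<^sup>2 \<partial>?M) \<le> (\<integral>\<omega>. (Y \<omega>)\<^sup>2 * Qf k N \<omega> \<partial>?M)"
  proof -
    let ?s = "\<lambda>i \<omega>. (Vf k i \<omega>)\<^sup>2 * (Y \<omega>)\<^sup>2"
    have sm: "?s i \<in> borel_measurable ?M" for i
      using dep_meas_Y[OF dep_Vf[of i k]] Ym by measurable
    have lim: "(\<lambda>i. integral\<^sup>L ?M (?s i)) \<longlonglongrightarrow> integral\<^sup>L ?M (\<lambda>\<omega>. (Wlim k \<omega>)\<^sup>2 * (Y \<omega>)\<^sup>2)"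
    proof (rule integral_dominated_convergence[where w="\<lambda>_. 1"])
      show "AE \<omega> in ?M. (\<lambda>i. ?s i \<omega>) \<longlonglongrightarrow> (Wlim k \<omega>)\<^sup>2 * (Y \<omega>)\<^sup>2"
        by (rule AE_mp[OF Wlim], intro AE_I2 impI) (intro tendsto_intros)
      show "AE \<omega> in ?M. norm (?s i \<omega>) \<le> 1" for i
      proof (intro AE_I2)
        fix \<omega>
        have "(Vf k i \<omega>)\<^sup>2 \<le> 1" "(Y \<omega>)\<^sup>2 \<le> 1"
          using Vf_bounds[OF k(1), of i \<omega>] bY[of \<omega>] by (auto simp: abs_square_le_1)
        then show "norm (?s i \<omega>) \<le> 1" by (simp add: mult_le_one)
      qed
    qed (use fm sm in auto)
    have le: "integral\<^sup>L ?M (?s i) \<le> (\<integral>\<omega>. (Y \<omega>)\<^sup>2 * Qf k N \<omega> \<partial>?M)" if "N \<le> i" for i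
    proof -
      have dY2: "dep (N - 1) (\<lambda>\<omega>. (Y \<omega>)\<^sup>2)" using dep_comp[OF dY, of "\<lambda>x. x\<^sup>2"] by simp
      have bY2: "\<bar>(Y \<omega>)\<^sup>2\<bar> \<le> 1" for \<omega> using bY[of \<omega>] by (simp add: abs_square_le_1)
      have dYi: "dep (i - 1) Y" by (rule dep_mono[OF dY]) (use that in simp)
      have "integral\<^sup>L ?M (?s i) \<le> (\<integral>\<omega>. (Y \<omega>)\<^sup>2 * Qf k i \<omega> \<partial>?M)"
      proof (rule integral_mono)
        show "integrable ?M (?s i)"
          by (rule dep_integrable[where B=1, OF dep_comp2[OF dep_Vf[of i k] dYi, of "\<lambda>v y. v\<^sup>2 * y\<^sup>2"]])
             (use that Vf_bounds[OF k(1)] bY in \<open>auto simp: abs_mult abs_square_le_1 mult_le_one\<close>)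
        show "integrable ?M (\<lambda>\<omega>. (Y \<omega>)\<^sup>2 * Qf k i \<omega>)"
          by (rule dep_integrable[where B=1, OF dep_comp2[OF dYi dep_Qf[of i k], of "\<lambda>y q. y\<^sup>2 * q"]])
             (use that Qf_bounds[OF k(1)] bY in \<open>auto simp: abs_mult abs_square_le_1 mult_le_one\<close>)
        fix \<omega>
        have "(Vf k i \<omega>)\<^sup>2 \<le> Qf k i \<omega>" by (rule Vf_sq_le_Qf[OF k(1)]) (use that N in auto)
        then show "?s i \<omega> \<le> (Y \<omega>)\<^sup>2 * Qf k i \<omega>"
          by (subst mult.commute) (rule mult_left_mono, auto)
      qed
      also have "\<dots> = (\<integral>\<omega>. (Y \<omega>)\<^sup>2 * Qf k N \<omega> \<partial>?M)"
        by (rule Q_iter[OF k(1) k(2) that r dY2 bY2])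
      finally show ?thesis .
    qed
    show ?thesis by (rule LIMSEQ_le_const2[OF lim]) (use le in auto)
  qed
  then have "(\<integral>\<omega>. (Wlim k \<omega>)\<^sup>2 * (Y \<omega>)\<^sup>2 \<partial>?M) / \<epsilon>\<^sup>2 \<le> (\<integral>\<omega>. (Y \<omega>)\<^sup>2 * Qf k N \<omega> \<partial>?M) / \<epsilon>\<^sup>2"
    using eps by (simp add: divide_right_mono)
  finally show ?thesis .
qed

definition Pr :: "real \<Rightarrow> nat \<Rightarrow> nat \<Rightarrow> real" where
  "Pr \<alpha> a b = (\<Prod>i\<in>{a..<b}. (1 + \<alpha> / real i))"

definition Wsum :: "real \<Rightarrow> nat \<Rightarrow> nat \<Rightarrow> real" where
  "Wsum \<beta> k n = (\<Sum>m\<in>{k..<n}. \<beta> * real k * Pr \<beta> k m / real m * Pr (2 * \<beta>) (m + 1) n)"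

lemma Pr_Suc: "a \<le> b \<Longrightarrow> Pr \<alpha> a (Suc b) = Pr \<alpha> a b * (1 + \<alpha> / real b)"
  unfolding Pr_def by (rule prod.atLeastLessThan_Suc)

lemma Pr_same[simp]: "Pr \<alpha> a a = 1"
  unfolding Pr_def by simp

lemma Pr_nonneg: "0 \<le> \<alpha> \<Longrightarrow> 0 \<le> Pr \<alpha> a b"
  unfolding Pr_def by (intro prod_nonneg) auto

lemma Wsum_Suc: "k \<le> n \<Longrightarrow> Wsum \<beta> k (Suc n) = (1 + 2 * \<beta> / real n) * Wsum \<beta> k n + \<beta> * real k * Pr \<beta> k n / real n"
proof -
  assume kn: "k \<le> n"
  have "Wsum \<beta> k (Suc n) = (\<Sum>m\<in>{k..<n}. \<beta> * real k * Pr \<beta> k m / real m * Pr (2 * \<beta>) (m + 1) (Suc n))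
      + \<beta> * real k * Pr \<beta> k n / real n * Pr (2 * \<beta>) (n + 1) (Suc n)"
    unfolding Wsum_def using kn by (simp add: sum.atLeastLessThan_Suc)
  also have "(\<Sum>m\<in>{k..<n}. \<beta> * real k * Pr \<beta> k m / real m * Pr (2 * \<beta>) (m + 1) (Suc n))
      = (\<Sum>m\<in>{k..<n}. (1 + 2 * \<beta> / real n) * (\<beta> * real k * Pr \<beta> k m / real m * Pr (2 * \<beta>) (m + 1) n))"
    by (rule sum.cong[OF refl]) (simp add: Pr_Suc)
  also have "\<dots> = (1 + 2 * \<beta> / real n) * Wsum \<beta> k n"
    unfolding Wsum_def by (simp add: sum_distrib_left)
  finally show ?thesis by simp
qed

lemma Qf_int:
  "1 \<le> k \<Longrightarrow> integrable (yule_space r) (\<lambda>\<omega>. Qf k n \<omega> * f (cnt k n \<omega>))"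
proof -
  assume k: "1 \<le> k"
  define B where "B = (\<Sum>c\<le>n. \<bar>f c\<bar>)"
  have fb: "\<bar>f c\<bar> \<le> B" if "c \<le> n" for c
    unfolding B_def by (rule member_le_sum[where f="\<lambda>c. \<bar>f c\<bar>"]) (use that in auto)
  show ?thesis
  proof (rule dep_integrable[where B=B])
    show "dep (n - 1) (\<lambda>\<omega>. Qf k n \<omega> * f (cnt k n \<omega>))"
      using dep_comp2[OF dep_Qf[of n k] dep_cnt[of n k], of "\<lambda>q c. q * f c"] by simp
    fix \<omega>
    have "\<bar>Qf k n \<omega>\<bar> \<le> 1" using Qf_bounds[OF k] by auto
    moreover have "\<bar>f (cnt k n \<omega>)\<bar> \<le> B" using fb cnt_le by blast
    ultimately show "\<bar>Qf k n \<omega> * f (cnt k n \<omega>)\<bar> \<le> B"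
      by (simp add: abs_mult) (metis abs_ge_zero mult_le_one mult.commute mult_left_le order_trans)
  qed
qed

definition mu :: "real \<Rightarrow> nat \<Rightarrow> nat \<Rightarrow> nat \<Rightarrow> real" where
  "mu r j k n = (\<integral>\<omega>. Qf k n \<omega> * (real (cnt k n \<omega>)) ^ j \<partial>yule_space r)"

lemma mu_step:
  assumes k: "1 \<le> k" "k \<le> n" and r: "0 \<le> r" "r \<le> 1"
  shows "mu r 0 k (Suc n) = mu r 0 k n"
    and "mu r 1 k (Suc n) = (1 + (1 - r) / real n) * mu r 1 k n"
    and "mu r 2 k (Suc n) = (1 + 2 * (1 - r) / real n) * mu r 2 k n + (1 - r) / real n * mu r 1 k n"
proof -
  have n: "0 < real n" using k by simp
  have st: "(\<integral>\<omega>. 1 * (Qf k (Suc n) \<omega> * f (cnt k (Suc n) \<omega>)) \<partial>yule_space r)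
    = (\<integral>\<omega>. 1 * (Qf k n \<omega> * (f (cnt k n \<omega>) + (1 - r) * real (cnt k n \<omega>) / real n
          * (f (Suc (cnt k n \<omega>)) - f (cnt k n \<omega>)))) \<partial>yule_space r)" for f
    by (rule Q_step[where Bg=1, OF k r dep_const]) simp
  show "mu r 0 k (Suc n) = mu r 0 k n"
    using st[of "\<lambda>_. 1"] by (simp add: mu_def)
  show "mu r 1 k (Suc n) = (1 + (1 - r) / real n) * mu r 1 k n"
  proof -
    have "mu r 1 k (Suc n) = (\<integral>\<omega>. 1 * (Qf k (Suc n) \<omega> * real (cnt k (Suc n) \<omega>)) \<partial>yule_space r)"
      unfolding mu_def by simp
    also have "\<dots> = (\<integral>\<omega>. 1 * (Qf k n \<omega> * (real (cnt k n \<omega>) + (1 - r) * real (cnt k n \<omega>) / real n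
          * (real (Suc (cnt k n \<omega>)) - real (cnt k n \<omega>)))) \<partial>yule_space r)"
      by (rule st)
    also have "\<dots> = (\<integral>\<omega>. (1 + (1 - r) / real n) * (Qf k n \<omega> * real (cnt k n \<omega>)) \<partial>yule_space r)"
      by (rule Bochner_Integration.integral_cong[OF refl]) (simp add: algebra_simps)
    also have "\<dots> = (1 + (1 - r) / real n) * mu r 1 k n" unfolding mu_def by simp
    finally show ?thesis .
  qed
  show "mu r 2 k (Suc n) = (1 + 2 * (1 - r) / real n) * mu r 2 k n + (1 - r) / real n * mu r 1 k n"
  proof -
    have "mu r 2 k (Suc n) = (\<integral>\<omega>. 1 * (Qf k (Suc n) \<omega> * (real (cnt k (Suc n) \<omega>))\<^sup>2) \<partial>yule_space r)"
      unfolding mu_def by simp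
    also have "\<dots> = (\<integral>\<omega>. 1 * (Qf k n \<omega> * ((real (cnt k n \<omega>))\<^sup>2 + (1 - r) * real (cnt k n \<omega>) / real n
          * ((real (Suc (cnt k n \<omega>)))\<^sup>2 - (real (cnt k n \<omega>))\<^sup>2))) \<partial>yule_space r)"
      by (rule st)
    also have "\<dots> = (\<integral>\<omega>. (1 + 2 * (1 - r) / real n) * (Qf k n \<omega> * (real (cnt k n \<omega>))\<^sup>2)
         + (1 - r) / real n * (Qf k n \<omega> * real (cnt k n \<omega>)) \<partial>yule_space r)"
      by (rule Bochner_Integration.integral_cong[OF refl]) (use n in \<open>simp add: field_simps power2_eq_square\<close>)
    also have "\<dots> = (1 + 2 * (1 - r) / real n) * mu r 2 k n + (1 - r) / real n * mu r 1 k n"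
      unfolding mu_def
      using Qf_int[OF k(1), of r n "\<lambda>c. (real c)\<^sup>2"] Qf_int[OF k(1), of r n real] by simp
    finally show ?thesis .
  qed
qed

lemma Wsum_nonneg: "0 \<le> \<beta> \<Longrightarrow> 0 \<le> Wsum \<beta> k n"
  unfolding Wsum_def by (intro sum_nonneg mult_nonneg_nonneg divide_nonneg_nonneg Pr_nonneg) auto

lemma aux_eq: "(e::real) * k2 * P\<^sup>2 * c\<^sup>2 + e * B = e * (k2 * (P * c)\<^sup>2 + B)"
  by (simp add: power_mult_distrib algebra_simps)

lemma mom:
  assumes k: "1 \<le> k" "k \<le> n" and r: "0 \<le> r" "r \<le> 1"
  shows "mu r 0 k n = mu r 0 k k \<and> mu r 1 k n = mu r 0 k k * real k * Pr (1 - r) k n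
     \<and> mu r 2 k n \<le> mu r 0 k k * ((real k)\<^sup>2 * (Pr (1 - r) k n)\<^sup>2 + Wsum (1 - r) k n)"
  using k(2)
proof (induction n rule: dec_induct)
  case base
  have "mu r 1 k k = mu r 0 k k * real k" unfolding mu_def by (simp add: cnt_k)
  moreover have "mu r 2 k k = mu r 0 k k * (real k)\<^sup>2" unfolding mu_def by (simp add: cnt_k)
  ultimately show ?case by (simp add: Wsum_def)
next
  case (step n)
  let ?e = "mu r 0 k k" and ?P = "Pr (1 - r) k n" and ?W = "Wsum (1 - r) k n"
  have kn: "1 \<le> k" "k \<le> n" using step k by auto
  have n: "0 < real n" using kn by simp
  note ms = mu_step[OF kn r]
  have e0: "0 \<le> ?e" unfolding mu_def by (rule Bochner_Integration.integral_nonneg) (use Qf_bounds[OF k(1)] in simp)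
  have m0: "mu r 0 k (Suc n) = ?e" using ms(1) step.IH by simp
  have m1: "mu r 1 k (Suc n) = ?e * real k * Pr (1 - r) k (Suc n)"
    using ms(2) step.IH kn by (simp add: Pr_Suc)
  have "mu r 2 k (Suc n) = (1 + 2 * (1 - r) / real n) * mu r 2 k n + (1 - r) / real n * mu r 1 k n"
    by (rule ms(3))
  also have "\<dots> \<le> (1 + 2 * (1 - r) / real n) * (?e * ((real k)\<^sup>2 * ?P\<^sup>2 + ?W)) + (1 - r) / real n * (?e * real k * ?P)"
  proof -
    have "0 \<le> 1 + 2 * (1 - r) / real n" "0 \<le> (1 - r) / real n" using r n by simp_all
    then show ?thesis using step.IH by (intro add_mono mult_left_mono) auto
  qed
  also have "\<dots> \<le> ?e * ((real k)\<^sup>2 * (Pr (1 - r) k (Suc n))\<^sup>2 + Wsum (1 - r) k (Suc n))"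
  proof -
    have A: "(1 + 2 * (1 - r) / real n) \<le> (1 + (1 - r) / real n)\<^sup>2"
    proof -
      have "(1 + (1 - r) / real n)\<^sup>2 = 1 + 2 * (1 - r) / real n + ((1 - r) / real n)\<^sup>2"
        by (simp add: power2_sum)
      then show ?thesis by simp
    qed
    have B: "?e * (real k)\<^sup>2 * ?P\<^sup>2 * (1 + 2 * (1 - r) / real n) \<le> ?e * (real k)\<^sup>2 * ?P\<^sup>2 * (1 + (1 - r) / real n)\<^sup>2"
      by (rule mult_left_mono[OF A]) (use e0 in simp)
    have "(1 + 2 * (1 - r) / real n) * (?e * ((real k)\<^sup>2 * ?P\<^sup>2 + ?W)) + (1 - r) / real n * (?e * real k * ?P)
       = ?e * (real k)\<^sup>2 * ?P\<^sup>2 * (1 + 2 * (1 - r) / real n) + ?e * ((1 + 2 * (1 - r) / real n) * ?W + (1 - r) * real k * ?P / real n)"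
      by (simp add: algebra_simps)
    also have "\<dots> \<le> ?e * (real k)\<^sup>2 * ?P\<^sup>2 * (1 + (1 - r) / real n)\<^sup>2 + ?e * ((1 + 2 * (1 - r) / real n) * ?W + (1 - r) * real k * ?P / real n)"
      using B by simp
    also have "\<dots> = ?e * ((real k)\<^sup>2 * (?P * (1 + (1 - r) / real n))\<^sup>2 + ((1 + 2 * (1 - r) / real n) * ?W + (1 - r) * real k * ?P / real n))"
      by (rule aux_eq)
    also have "\<dots> = ?e * ((real k)\<^sup>2 * (Pr (1 - r) k (Suc n))\<^sup>2 + Wsum (1 - r) k (Suc n))"
      using kn by (simp only: Pr_Suc Wsum_Suc)
    finally show ?thesis .
  qed
  finally show ?case using m0 m1 by simp
qed

lemma e_bound:
  assumes k: "1 \<le> k"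
  shows "0 \<le> mu r 0 k k" "mu r 0 k k \<le> 2 / (real k)\<^sup>2"
proof -
  interpret P: prob_space "yule_space r" by (rule prob_Y)
  show "0 \<le> mu r 0 k k" unfolding mu_def by (rule Bochner_Integration.integral_nonneg) (use Qf_bounds[OF k] in simp)
  have "mu r 0 k k \<le> (\<integral>\<omega>. 2 / (real k)\<^sup>2 \<partial>yule_space r)"
    unfolding mu_def
    by (rule integral_mono) (use Qf_int[OF k, of r k "\<lambda>_. 1"] Qf_k[OF k] in auto)
  then show "mu r 0 k k \<le> 2 / (real k)\<^sup>2" using P.prob_space by simp
qed

lemma Qvar:
  assumes k: "1 \<le> k" "k \<le> N" and r: "0 \<le> r" "r \<le> 1"
  shows "(\<integral>\<omega>. Qf k N \<omega> * (real (cnt k N \<omega>) - real k * t)\<^sup>2 \<partial>yule_space r)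
    \<le> 2 / (real k)\<^sup>2 * ((real k)\<^sup>2 * (Pr (1 - r) k N - t)\<^sup>2 + Wsum (1 - r) k N)"
proof -
  let ?e = "mu r 0 k k" and ?P = "Pr (1 - r) k N" and ?W = "Wsum (1 - r) k N"
  have M: "mu r 0 k N = ?e" "mu r 1 k N = ?e * real k * ?P" "mu r 2 k N \<le> ?e * ((real k)\<^sup>2 * ?P\<^sup>2 + ?W)"
    using mom[OF k r] by auto
  have "(\<integral>\<omega>. Qf k N \<omega> * (real (cnt k N \<omega>) - real k * t)\<^sup>2 \<partial>yule_space r)
     = (\<integral>\<omega>. Qf k N \<omega> * (real (cnt k N \<omega>))\<^sup>2 - 2 * (real k * t) * (Qf k N \<omega> * real (cnt k N \<omega>))
         + (real k * t)\<^sup>2 * (Qf k N \<omega> * 1) \<partial>yule_space r)"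
    by (rule Bochner_Integration.integral_cong[OF refl]) (simp add: power2_eq_square algebra_simps)
  also have "\<dots> = mu r 2 k N - 2 * (real k * t) * mu r 1 k N + (real k * t)\<^sup>2 * mu r 0 k N"
    unfolding mu_def
    using Qf_int[OF k(1), of r N "\<lambda>c. (real c)\<^sup>2"] Qf_int[OF k(1), of r N real] Qf_int[OF k(1), of r N "\<lambda>_. 1"]
    by simp
  also have "\<dots> \<le> ?e * ((real k)\<^sup>2 * ?P\<^sup>2 + ?W) - 2 * (real k * t) * (?e * real k * ?P) + (real k * t)\<^sup>2 * ?e"
    using M by simp
  also have "\<dots> = ?e * ((real k)\<^sup>2 * (?P - t)\<^sup>2 + ?W)"
    by (simp add: power2_eq_square algebra_simps)
  also have "\<dots> \<le> 2 / (real k)\<^sup>2 * ((real k)\<^sup>2 * (?P - t)\<^sup>2 + ?W)"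
    by (rule mult_right_mono[OF e_bound(2)[OF k(1)]]) (use Wsum_nonneg[of "1 - r" k N] r in simp)
  finally show ?thesis .
qed

lemma ln_step: "1 \<le> b \<Longrightarrow> 1 / (real b + 1) \<le> ln ((real b + 1) / real b)"
proof -
  assume b: "1 \<le> b"
  have "ln (real b / (real b + 1)) \<le> real b / (real b + 1) - 1"
    using b by (intro ln_le_minus_one) auto
  also have "\<dots> = - (1 / (real b + 1))" using b by (simp add: field_simps)
  finally have "ln (real b / (real b + 1)) \<le> - (1 / (real b + 1))" .
  moreover have "ln (real b / (real b + 1)) = - ln ((real b + 1) / real b)"
    using b by (simp add: ln_div)
  ultimately show ?thesis by simp
qed

lemma harm_bound:
  assumes "1 \<le> a" "a \<le> b"
  shows "(\<Sum>i\<in>{a..b}. 1 / real i) \<le> 1 / real a + ln (real b / real a)"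
  using assms(2)
proof (induction b rule: dec_induct)
  case base then show ?case by simp
next
  case (step b)
  have b: "1 \<le> b" using step assms by simp
  have "(\<Sum>i\<in>{a..Suc b}. 1 / real i) = (\<Sum>i\<in>{a..b}. 1 / real i) + 1 / (real b + 1)"
    using step by (simp add: sum.cl_ivl_Suc add.commute)
  also have "\<dots> \<le> 1 / real a + (ln (real b / real a) + ln ((real b + 1) / real b))"
    using step.IH ln_step[OF b] by simp
  also have "ln (real b / real a) + ln ((real b + 1) / real b) = ln ((real b + 1) / real a)"
    using b assms by (simp add: ln_div)
  finally show ?case by (simp add: add.commute)
qed

lemma Pr_upper:
  assumes "0 \<le> \<alpha>" "1 \<le> a" "a \<le> b"
  shows "Pr \<alpha> a b \<le> exp (\<alpha> / real a) * (real b / real a) powr \<alpha>"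
proof -
  have "Pr \<alpha> a b \<le> (\<Prod>i\<in>{a..<b}. exp (\<alpha> / real i))"
    unfolding Pr_def by (intro prod_mono) (use assms in \<open>auto simp: exp_ge_add_one_self\<close>)
  also have "\<dots> = exp (\<alpha> * (\<Sum>i\<in>{a..<b}. 1 / real i))"
    by (simp add: exp_sum sum_distrib_left)
  also have "\<dots> \<le> exp (\<alpha> * (1 / real a + ln (real b / real a)))"
  proof -
    have "(\<Sum>i\<in>{a..<b}. 1 / real i) \<le> (\<Sum>i\<in>{a..b}. 1 / real i)"
      by (rule sum_mono2) auto
    also have "\<dots> \<le> 1 / real a + ln (real b / real a)" by (rule harm_bound[OF assms(2,3)])
    finally show ?thesis using assms(1) by (intro exp_le_cancel_iff[THEN iffD2] mult_left_mono) auto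
  qed
  also have "\<dots> = exp (\<alpha> / real a) * (real b / real a) powr \<alpha>"
    using assms by (simp add: powr_def distrib_left exp_add mult.commute)
  finally show ?thesis .
qed

lemma Pr_lower:
  assumes "0 \<le> \<beta>" "\<beta> \<le> 1" "1 \<le> a" "a \<le> b"
  shows "(real b / real a) powr \<beta> \<le> Pr \<beta> a b"
  using assms(4)
proof (induction b rule: dec_induct)
  case base then show ?case using assms by simp
next
  case (step b)
  have b: "1 \<le> b" using step assms by simp
  have y: "((real b + 1) / real b) powr \<beta> \<le> 1 + \<beta> / real b"
  proof -
    have "((real b + 1) / real b) powr \<beta> * 1 powr (1 - \<beta>) \<le> \<beta> * ((real b + 1) / real b) + (1 - \<beta>) * 1"
      by (rule Youngs_inequality_0) (use assms b in auto)
    also have "\<dots> = 1 + \<beta> / real b" using b by (simp add: field_simps)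
    finally show ?thesis by simp
  qed
  have "(real (Suc b) / real a) powr \<beta> = (real b / real a) powr \<beta> * ((real b + 1) / real b) powr \<beta>"
  proof -
    have eq: "real (Suc b) / real a = (real b / real a) * ((real b + 1) / real b)" using b assms by (simp add: field_simps)
    have "(real (Suc b) / real a) powr \<beta> = ((real b / real a) * ((real b + 1) / real b)) powr \<beta>"
      by (simp only: eq)
    also have "\<dots> = (real b / real a) powr \<beta> * ((real b + 1) / real b) powr \<beta>"
      by (rule powr_mult)
    finally show ?thesis .
  qed
  also have "\<dots> \<le> Pr \<beta> a b * (1 + \<beta> / real b)"
    using step.IH y Pr_nonneg[of \<beta> a b] assms by (intro mult_mono) auto
  also have "\<dots> = Pr \<beta> a (Suc b)" using step by (simp add: Pr_Suc)
  finally show ?case .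
qed

lemma tail_step:
  fixes x \<eta> :: real
  assumes "1 \<le> x" "0 < \<eta>"
  shows "(x + 1) powr (-(1 + \<eta>)) \<le> (x powr (-\<eta>) - (x + 1) powr (-\<eta>)) / \<eta>"
proof -
  let ?y = "x + 1"
  have y0: "0 < ?y" using assms by simp
  have y1: "0 < x" using assms by simp
  note y = y0 y1
  have "ln (x / ?y) \<le> x / ?y - 1" using y by (intro ln_le_minus_one) auto
  also have "\<dots> = - (1 / ?y)" using y by (simp add: field_simps)
  finally have l: "ln (x / ?y) \<le> - (1 / ?y)" .
  have "1 + \<eta> / ?y \<le> exp (\<eta> / ?y)" by (rule exp_ge_add_one_self)
  also have "\<dots> \<le> exp (- \<eta> * ln (x / ?y))"
  proof -
    have "\<eta> * (1 / ?y) \<le> \<eta> * (- ln (x / ?y))" by (rule mult_left_mono) (use l assms in auto)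
    then show ?thesis by simp
  qed
  also have "\<dots> = (x / ?y) powr (- \<eta>)" using y by (simp add: powr_def mult.commute)
  finally have A: "1 + \<eta> / ?y \<le> (x / ?y) powr (- \<eta>)" .
  have B: "x powr (-\<eta>) = ?y powr (-\<eta>) * (x / ?y) powr (-\<eta>)"
  proof -
    have "x = ?y * (x / ?y)" using y by simp
    then have "x powr (-\<eta>) = (?y * (x / ?y)) powr (-\<eta>)" by (rule arg_cong)
    also have "\<dots> = ?y powr (-\<eta>) * (x / ?y) powr (-\<eta>)" by (rule powr_mult)
    finally show ?thesis .
  qed
  have C: "?y powr (-(1 + \<eta>)) = ?y powr (-\<eta>) / ?y"
  proof -
    have "-(1 + \<eta>) = -\<eta> - 1" by simp
    then have "?y powr (-(1 + \<eta>)) = ?y powr (-\<eta> - 1)" by (rule arg_cong)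
    also have "\<dots> = ?y powr (-\<eta>) / ?y powr 1" by (rule powr_diff)
    also have "\<dots> = ?y powr (-\<eta>) / ?y" using y by simp
    finally show ?thesis .
  qed
  have "?y powr (-\<eta>) * (1 + \<eta> / ?y) \<le> ?y powr (-\<eta>) * (x / ?y) powr (- \<eta>)"
    by (rule mult_left_mono[OF A]) simp
  then have "?y powr (-\<eta>) + \<eta> * (?y powr (-\<eta>) / ?y) \<le> x powr (-\<eta>)"
    using B by (simp add: algebra_simps)
  then have "\<eta> * ?y powr (-(1 + \<eta>)) \<le> x powr (-\<eta>) - ?y powr (-\<eta>)" using C by simp
  then show ?thesis using assms by (simp add: field_simps)
qed

lemma tail_sum:
  fixes \<eta> :: real
  assumes "1 \<le> m" "0 < \<eta>"
  shows "(\<Sum>n\<in>{m..M}. real n powr (-(1 + \<eta>))) \<le> (1 + 1 / \<eta>) * real m powr (-\<eta>)"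
proof (cases "m \<le> M")
  case False
  then have "{m..M} = {}" by auto
  then show ?thesis using assms by simp
next
  case True
  have claim: "(\<Sum>n\<in>{m..M}. real n powr (-(1 + \<eta>))) \<le> real m powr (-(1 + \<eta>)) + (real m powr (-\<eta>) - real M powr (-\<eta>)) / \<eta>"
    using True
  proof (induction M rule: dec_induct)
    case base then show ?case by simp
  next
    case (step M)
    have M: "1 \<le> real M" using step assms by simp
    have "(\<Sum>n\<in>{m..Suc M}. real n powr (-(1 + \<eta>))) = (\<Sum>n\<in>{m..M}. real n powr (-(1 + \<eta>))) + (real M + 1) powr (-(1 + \<eta>))"
      using step by (simp add: sum.cl_ivl_Suc add.commute)
    also have "\<dots> \<le> real m powr (-(1 + \<eta>)) + (real m powr (-\<eta>) - real M powr (-\<eta>)) / \<eta>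
         + (real M powr (-\<eta>) - (real M + 1) powr (-\<eta>)) / \<eta>"
      using step.IH tail_step[OF M assms(2)] by simp
    also have "\<dots> = real m powr (-(1 + \<eta>)) + (real m powr (-\<eta>) - real (Suc M) powr (-\<eta>)) / \<eta>"
      by (simp add: diff_divide_distrib add.commute)
    finally show ?case .
  qed
  also have "\<dots> \<le> real m powr (-\<eta>) + real m powr (-\<eta>) / \<eta>"
  proof -
    have "real m powr (-(1 + \<eta>)) \<le> real m powr (-\<eta>)" using assms by (intro powr_mono) auto
    moreover have "(real m powr (-\<eta>) - real M powr (-\<eta>)) / \<eta> \<le> real m powr (-\<eta>) / \<eta>"
      using assms by (intro divide_right_mono) auto
    ultimately show ?thesis by simp
  qed
  also have "\<dots> = (1 + 1 / \<eta>) * real m powr (-\<eta>)" by (simp add: algebra_simps)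
  finally show ?thesis .
qed


lemma pos_eq_by_ln: "(0::real) < a \<Longrightarrow> 0 < b \<Longrightarrow> ln a = ln b \<Longrightarrow> a = b"
  by simp

lemma id1:
  fixes x y z b :: real assumes "0 < x" "0 < y" "0 < z"
  shows "y * (x / y) powr b / x * (z / x) powr (2 * b) = y powr (1 - b) * z powr (2 * b) * x powr (-(1 + b))"
  by (rule pos_eq_by_ln) (use assms in \<open>simp_all add: ln_mult ln_div ln_powr algebra_simps\<close>)

lemma id2:
  fixes y z b :: real assumes "0 < y" "0 < z"
  shows "y * (z / y) powr (2 * b) = y powr (1 - b) * y powr (-b) * z powr (2 * b)"
  by (rule pos_eq_by_ln) (use assms in \<open>simp_all add: ln_mult ln_div ln_powr algebra_simps\<close>)

lemma id3:
  fixes k N r :: real assumes "0 < k" "0 < N"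
  shows "N * (k / N) powr r = k * (N / k) powr (1 - r)"
  by (rule pos_eq_by_ln) (use assms in \<open>simp_all add: ln_mult ln_div ln_powr algebra_simps\<close>)

lemma id4:
  fixes k N b D :: real assumes "0 < k" "0 < N" "0 < D"
  shows "(N / k) powr (2 * b) / (k * D\<^sup>2) = (N powr b / D)\<^sup>2 * k powr (-(1 + 2 * b))"
  by (rule pos_eq_by_ln) (use assms in \<open>simp_all add: ln_mult ln_div ln_powr algebra_simps power2_eq_square\<close>)

lemma exp_minus_one_le: "0 \<le> (x::real) \<Longrightarrow> exp x - 1 \<le> x * exp x"
proof -
  assume x: "0 \<le> x"
  have "1 - x \<le> exp (- x)" using exp_ge_add_one_self[of "-x"] by simp
  then have "(1 - x) * exp x \<le> exp (- x) * exp x" by (rule mult_right_mono) simp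
  then have "(1 - x) * exp x \<le> 1" by (simp add: exp_minus field_simps)
  then show ?thesis by (simp add: algebra_simps)
qed

lemma Wsum_bound:
  assumes b: "0 < \<beta>" "\<beta> \<le> 1" and k: "1 \<le> k" "k \<le> N"
  shows "Wsum \<beta> k N \<le> exp 1 ^ 3 * (\<beta> + 1) * (real k * (real N / real k) powr (2 * \<beta>))"
proof -
  let ?c = "\<beta> * exp 1 ^ 3 * (real k powr (1 - \<beta>) * real N powr (2 * \<beta>))"
  have termb: "\<beta> * real k * Pr \<beta> k m / real m * Pr (2 * \<beta>) (m + 1) N \<le> ?c * real m powr (-(1 + \<beta>))"
    if m: "m \<in> {k..<N}" for m
  proof -
    have m1: "1 \<le> m" "k \<le> m" "m + 1 \<le> N" using m k by auto
    have P1: "Pr \<beta> k m \<le> exp 1 * (real m / real k) powr \<beta>"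
    proof -
      have A: "Pr \<beta> k m \<le> exp (\<beta> / real k) * (real m / real k) powr \<beta>"
        by (rule Pr_upper) (use b m1 k in auto)
      have B: "exp (\<beta> / real k) \<le> exp 1" using b k by (simp add: divide_le_eq_1)
      have "exp (\<beta> / real k) * (real m / real k) powr \<beta> \<le> exp 1 * (real m / real k) powr \<beta>"
        by (rule mult_right_mono[OF B]) simp
      then show ?thesis using A by linarith
    qed
    have P2: "Pr (2 * \<beta>) (m + 1) N \<le> exp 1 ^ 2 * (real N / real m) powr (2 * \<beta>)"
    proof -
      have A: "Pr (2 * \<beta>) (m + 1) N \<le> exp (2 * \<beta> / real (m + 1)) * (real N / real (m + 1)) powr (2 * \<beta>)"
        by (rule Pr_upper) (use b m1 in auto)
      have B: "exp (2 * \<beta> / real (m + 1)) \<le> exp 1 ^ 2"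
      proof -
        have "2 * \<beta> / real (m + 1) \<le> 2" using b by (simp add: divide_le_eq)
        then have "exp (2 * \<beta> / real (m + 1)) \<le> exp 2" by simp
        also have "exp (2::real) = exp 1 ^ 2" by (metis exp_add one_add_one power2_eq_square)
        finally show ?thesis .
      qed
      have C: "(real N / real (m + 1)) powr (2 * \<beta>) \<le> (real N / real m) powr (2 * \<beta>)"
        by (rule powr_mono2) (use b m1 in \<open>auto simp: frac_le\<close>)
      have "exp (2 * \<beta> / real (m + 1)) * (real N / real (m + 1)) powr (2 * \<beta>) \<le> exp 1 ^ 2 * (real N / real m) powr (2 * \<beta>)"
        by (rule mult_mono[OF B C]) auto
      then show ?thesis using A by linarith
    qed
    have "\<beta> * real k * Pr \<beta> k m / real m * Pr (2 * \<beta>) (m + 1) N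
        \<le> \<beta> * real k * (exp 1 * (real m / real k) powr \<beta>) / real m * (exp 1 ^ 2 * (real N / real m) powr (2 * \<beta>))"
      using P1 P2 b m1 Pr_nonneg[of \<beta> k m] Pr_nonneg[of "2 * \<beta>" "m + 1" N]
      by (intro mult_mono divide_right_mono mult_left_mono) auto
    also have "\<dots> = \<beta> * exp 1 ^ 3 * (real k * (real m / real k) powr \<beta> / real m * (real N / real m) powr (2 * \<beta>))"
      by (simp add: power3_eq_cube power2_eq_square algebra_simps)
    also have "\<dots> = ?c * real m powr (-(1 + \<beta>))"
      using id1[of "real m" "real k" "real N" \<beta>] m1 k by (simp add: algebra_simps)
    finally show ?thesis .
  qed
  have "Wsum \<beta> k N \<le> (\<Sum>m\<in>{k..<N}. ?c * real m powr (-(1 + \<beta>)))"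
    unfolding Wsum_def by (rule sum_mono) (rule termb)
  also have "\<dots> \<le> (\<Sum>m\<in>{k..N}. ?c * real m powr (-(1 + \<beta>)))"
    using b by (intro sum_mono2) auto
  also have "\<dots> = ?c * (\<Sum>m\<in>{k..N}. real m powr (-(1 + \<beta>)))" by (simp add: sum_distrib_left)
  also have "\<dots> \<le> ?c * ((1 + 1 / \<beta>) * real k powr (-\<beta>))"
    using tail_sum[OF k(1) b(1), of N] b by (intro mult_left_mono) auto
  also have "\<dots> = exp 1 ^ 3 * (\<beta> + 1) * (real k powr (1 - \<beta>) * real k powr (-\<beta>) * real N powr (2 * \<beta>))"
    using b by (simp add: field_simps)
  also have "\<dots> = exp 1 ^ 3 * (\<beta> + 1) * (real k * (real N / real k) powr (2 * \<beta>))"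
    using id2[of "real k" "real N" \<beta>] k by simp
  finally show ?thesis .
qed

lemma PT_bound:
  assumes b: "0 < \<beta>" "\<beta> \<le> 1" and k: "1 \<le> k" "k \<le> N"
  shows "(real k)\<^sup>2 * (Pr \<beta> k N - (real N / real k) powr \<beta>)\<^sup>2 \<le> exp 1 ^ 2 * (real N / real k) powr (2 * \<beta>)"
proof -
  let ?t = "(real N / real k) powr \<beta>"
  have lo: "?t \<le> Pr \<beta> k N" by (rule Pr_lower) (use b k in auto)
  have hi: "Pr \<beta> k N \<le> exp (\<beta> / real k) * ?t" by (rule Pr_upper) (use b k in auto)
  have x: "0 \<le> \<beta> / real k" "\<beta> / real k \<le> 1" using b k by (auto simp: divide_le_eq_1)
  have "exp (\<beta> / real k) - 1 \<le> \<beta> / real k * exp (\<beta> / real k)" by (rule exp_minus_one_le[OF x(1)])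
  also have "\<dots> \<le> 1 / real k * exp 1"
    using x b k by (intro mult_mono divide_right_mono) auto
  finally have ex: "exp (\<beta> / real k) - 1 \<le> exp 1 / real k" by simp
  have "Pr \<beta> k N - ?t \<le> (exp (\<beta> / real k) - 1) * ?t" using hi by (simp add: algebra_simps)
  also have "\<dots> \<le> exp 1 / real k * ?t" by (rule mult_right_mono[OF ex]) simp
  finally have d: "0 \<le> Pr \<beta> k N - ?t" "Pr \<beta> k N - ?t \<le> exp 1 / real k * ?t" using lo by auto
  have "(real k)\<^sup>2 * (Pr \<beta> k N - ?t)\<^sup>2 = (real k * (Pr \<beta> k N - ?t))\<^sup>2" by (simp add: power_mult_distrib)
  also have "\<dots> \<le> (real k * (exp 1 / real k * ?t))\<^sup>2"
    using d k by (intro power_mono mult_left_mono) auto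
  also have "\<dots> = exp 1 ^ 2 * ?t\<^sup>2" using k by (simp add: power_mult_distrib)
  also have "?t\<^sup>2 = (real N / real k) powr (2 * \<beta>)"
    by (simp add: power2_eq_square powr_add[symmetric])
  finally show ?thesis .
qed


lemma final_sum:
  fixes p :: "nat \<Rightarrow> real" and u B \<gamma> :: real
  assumes g: "1 < \<gamma>" and u: "0 < u" and B: "0 \<le> B"
    and p1: "\<And>k. k \<in> {1..N} \<Longrightarrow> p k \<le> 1"
    and p2: "\<And>k. k \<in> {1..N} \<Longrightarrow> p k \<le> B * u\<^sup>2 * real k powr (-\<gamma>)"
  shows "(\<Sum>k=1..N. p k) \<le> (1 + B * (1 + 1 / (\<gamma> - 1))) * u powr (2 / \<gamma>)"
proof -
  define A where "A = u powr (2 / \<gamma>)"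
  define m where "m = nat \<lfloor>A\<rfloor> + 1"
  define \<eta> where "\<eta> = \<gamma> - 1"
  have A0: "0 < A" unfolding A_def using u by simp
  have eta: "0 < \<eta>" unfolding \<eta>_def using g by simp
  have mA: "A \<le> real m" unfolding m_def using A0 by linarith
  have m1: "1 \<le> m" unfolding m_def by simp
  have fl: "real (nat \<lfloor>A\<rfloor>) \<le> A" using A0 by linarith
  have split: "(\<Sum>k=1..N. p k) = (\<Sum>k\<in>{1..N} \<inter> {..<m}. p k) + (\<Sum>k\<in>{1..N} - {..<m}. p k)"
    by (rule sum.Int_Diff) simp
  have s1: "(\<Sum>k\<in>{1..N} \<inter> {..<m}. p k) \<le> A"
  proof -
    have "(\<Sum>k\<in>{1..N} \<inter> {..<m}. p k) \<le> (\<Sum>k\<in>{1..N} \<inter> {..<m}. 1)"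
      by (rule sum_mono) (use p1 in auto)
    also have "\<dots> = real (card ({1..N} \<inter> {..<m}))" by simp
    also have "card ({1..N} \<inter> {..<m}) \<le> card {1..<m}" by (rule card_mono) auto
    then have "real (card ({1..N} \<inter> {..<m})) \<le> real (nat \<lfloor>A\<rfloor>)" by (simp add: m_def)
    finally show ?thesis using fl by linarith
  qed
  have s2: "(\<Sum>k\<in>{1..N} - {..<m}. p k) \<le> B * (1 + 1 / \<eta>) * A"
  proof -
    have "(\<Sum>k\<in>{1..N} - {..<m}. p k) \<le> (\<Sum>k\<in>{1..N} - {..<m}. B * u\<^sup>2 * real k powr (-\<gamma>))"
      by (rule sum_mono) (use p2 in auto)
    also have "\<dots> \<le> (\<Sum>k\<in>{m..N}. B * u\<^sup>2 * real k powr (-\<gamma>))"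
      by (rule sum_mono2) (use B in auto)
    also have "\<dots> = B * u\<^sup>2 * (\<Sum>k\<in>{m..N}. real k powr (-(1 + \<eta>)))"
      by (simp add: sum_distrib_left \<eta>_def)
    also have "\<dots> \<le> B * u\<^sup>2 * ((1 + 1 / \<eta>) * real m powr (-\<eta>))"
      by (rule mult_left_mono[OF tail_sum[OF m1 eta]]) (use B in simp)
    also have "\<dots> \<le> B * u\<^sup>2 * ((1 + 1 / \<eta>) * A powr (-\<eta>))"
    proof -
      have "real m powr (-\<eta>) \<le> A powr (-\<eta>)" by (rule powr_mono2') (use eta A0 mA in auto)
      then show ?thesis using B eta by (intro mult_left_mono) auto
    qed
    also have "u\<^sup>2 * A powr (-\<eta>) = A"
    proof -
      have "A powr \<gamma> = u powr (2 / \<gamma> * \<gamma>)" unfolding A_def by (simp add: powr_powr)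
      also have "2 / \<gamma> * \<gamma> = 2" using g by simp
      also have "u powr 2 = u\<^sup>2" using u by (simp add: powr_numeral)
      finally have "u\<^sup>2 = A powr \<gamma>" by simp
      then have "u\<^sup>2 * A powr (-\<eta>) = A powr (\<gamma> + - \<eta>)" by (simp only: powr_add)
      also have "\<gamma> + - \<eta> = 1" by (simp add: \<eta>_def)
      finally show ?thesis using A0 by simp
    qed
    then have "B * u\<^sup>2 * ((1 + 1 / \<eta>) * A powr (-\<eta>)) = B * (1 + 1 / \<eta>) * A"
      by (simp add: algebra_simps)
    finally show ?thesis .
  qed
  have e: "(1 + B * (1 + 1 / \<eta>)) * A = A + B * (1 + 1 / \<eta>) * A" by (simp add: ring_distribs)
  have "(\<Sum>k=1..N. p k) \<le> (1 + B * (1 + 1 / \<eta>)) * A" using split s1 s2 e by linarith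
  then show ?thesis by (simp only: A_def \<eta>_def)
qed

lemma Qmain:
  assumes k: "1 \<le> k" "k \<le> N" and r: "0 < r" "r < 1"
  shows "(\<integral>\<omega>. Qf k N \<omega> * (real (cnt k N \<omega>) - real k * (real N / real k) powr (1 - r))\<^sup>2 \<partial>yule_space r)
    \<le> 2 * (exp 1 ^ 2 + 2 * exp 1 ^ 3) * (real N / real k) powr (2 * (1 - r)) / real k"
proof -
  let ?T = "(real N / real k) powr (2 * (1 - r))"
  have b: "0 < 1 - r" "1 - r \<le> 1" using r by auto
  have "(\<integral>\<omega>. Qf k N \<omega> * (real (cnt k N \<omega>) - real k * (real N / real k) powr (1 - r))\<^sup>2 \<partial>yule_space r)
    \<le> 2 / (real k)\<^sup>2 * ((real k)\<^sup>2 * (Pr (1 - r) k N - (real N / real k) powr (1 - r))\<^sup>2 + Wsum (1 - r) k N)"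
    by (rule Qvar) (use k r in auto)
  also have "\<dots> \<le> 2 / (real k)\<^sup>2 * (exp 1 ^ 2 * ?T + exp 1 ^ 3 * ((1 - r) + 1) * (real k * ?T))"
    by (intro mult_left_mono add_mono PT_bound[OF b k] Wsum_bound[OF b k]) simp
  also have "\<dots> \<le> 2 / (real k)\<^sup>2 * (exp 1 ^ 2 * (real k * ?T) + exp 1 ^ 3 * 2 * (real k * ?T))"
  proof -
    have T0: "0 \<le> ?T" by simp
    have a1: "exp 1 ^ 2 * ?T \<le> exp 1 ^ 2 * (real k * ?T)"
      using k T0 by (intro mult_left_mono) (auto simp: mult_le_cancel_right1)
    have a2: "exp 1 ^ 3 * ((1 - r) + 1) * (real k * ?T) \<le> exp 1 ^ 3 * 2 * (real k * ?T)"
      using r k T0 by (intro mult_right_mono mult_left_mono) auto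
    show ?thesis by (rule mult_left_mono[OF add_mono[OF a1 a2]]) simp
  qed
  also have "\<dots> = 2 * (exp 1 ^ 2 + 2 * exp 1 ^ 3) * ?T / real k"
    using k by (simp add: field_simps power2_eq_square)
  finally show ?thesis .
qed

theorem lemma4p3:
  fixes r :: real
  assumes "0 < r" and "r < 1"
  shows "\<exists>C>0. \<forall>N::nat. N \<ge> 1 \<longrightarrow> (\<forall>S::real. S > 0 \<longrightarrow> (\<forall>\<delta>::real. \<delta> > 0 \<longrightarrow>
    (\<Sum>k=1..N. measure (yule_space r)
        {\<omega> \<in> space (yule_space r).
           \<bar>Wlim k \<omega> * (Xfrac k N \<omega> - (real k / real N) powr r)\<bar> > \<delta> * S / (2 * real N)})
    \<le> C * ((real N powr (1 - r)) / (\<delta> * S)) powr (2 / (3 - 2 * r))))"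
proof -
  define K1 :: real where "K1 = 2 * (exp 1 ^ 2 + 2 * exp 1 ^ 3)"
  define B :: real where "B = 4 * K1"
  define \<gamma> :: real where "\<gamma> = 3 - 2 * r"
  define C :: real where "C = 1 + B * (1 + 1 / (\<gamma> - 1))"
  have K1: "0 \<le> K1" unfolding K1_def by simp
  have g: "1 < \<gamma>" unfolding \<gamma>_def using assms by simp
  have C0: "0 < C" unfolding C_def B_def using K1 g by (simp add: add_pos_nonneg)
  have main: "(\<Sum>k=1..N. measure (yule_space r)
        {\<omega> \<in> space (yule_space r).
           \<bar>Wlim k \<omega> * (Xfrac k N \<omega> - (real k / real N) powr r)\<bar> > \<delta> * S / (2 * real N)})
    \<le> C * ((real N powr (1 - r)) / (\<delta> * S)) powr (2 / (3 - 2 * r))"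
    if N: "1 \<le> N" and S: "0 < S" and d: "0 < \<delta>" for N S \<delta>
  proof -
    interpret P: prob_space "yule_space r" by (rule prob_Y)
    define u where "u = real N powr (1 - r) / (\<delta> * S)"
    define \<epsilon> where "\<epsilon> = \<delta> * S / (2 * real N)"
    have u0: "0 < u" unfolding u_def using N S d by simp
    have eps: "0 < \<epsilon>" unfolding \<epsilon>_def using N S d by simp
    let ?p = "\<lambda>k. measure (yule_space r)
        {\<omega> \<in> space (yule_space r). \<bar>Wlim k \<omega> * (Xfrac k N \<omega> - (real k / real N) powr r)\<bar> > \<epsilon>}"
    have "(\<Sum>k=1..N. ?p k) \<le> (1 + B * (1 + 1 / (\<gamma> - 1))) * u powr (2 / \<gamma>)"
    proof (rule final_sum[OF g u0])
      show "0 \<le> B" unfolding B_def using K1 by simp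
      fix k assume kk: "k \<in> {1..N}"
      then have k: "1 \<le> k" "k \<le> N" by auto
      show "?p k \<le> 1" by (rule P.prob_le_1)
      let ?t = "(real N / real k) powr (1 - r)"
      have Yeq: "Xfrac k N \<omega> - (real k / real N) powr r = (real (cnt k N \<omega>) - real k * ?t) / real N" for \<omega>
      proof -
        have "real N * (real k / real N) powr r = real k * ?t" by (rule id3) (use k in auto)
        then have "(real k / real N) powr r = real k * ?t / real N" using k by (simp add: field_simps)
        then show ?thesis unfolding Xfrac_eq by (simp add: diff_divide_distrib)
      qed
      have "?p k \<le> (\<integral>\<omega>. (Xfrac k N \<omega> - (real k / real N) powr r)\<^sup>2 * Qf k N \<omega> \<partial>yule_space r) / \<epsilon>\<^sup>2"
        by (rule per_k_cheb[OF k _ _ eps]) (use assms in auto)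
      also have "(\<integral>\<omega>. (Xfrac k N \<omega> - (real k / real N) powr r)\<^sup>2 * Qf k N \<omega> \<partial>yule_space r)
          = (\<integral>\<omega>. Qf k N \<omega> * (real (cnt k N \<omega>) - real k * ?t)\<^sup>2 \<partial>yule_space r) / (real N)\<^sup>2"
        unfolding Yeq by (simp add: power_divide mult.commute)
      also have "\<dots> \<le> K1 * (real N / real k) powr (2 * (1 - r)) / real k / (real N)\<^sup>2"
        by (rule divide_right_mono[OF Qmain[OF k assms, folded K1_def]]) simp
      finally have "?p k \<le> K1 * (real N / real k) powr (2 * (1 - r)) / real k / (real N)\<^sup>2 / \<epsilon>\<^sup>2"
        using eps by (simp add: divide_right_mono)
      also have "\<dots> = B * ((real N / real k) powr (2 * (1 - r)) / (real k * (\<delta> * S)\<^sup>2))"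
        unfolding B_def \<epsilon>_def using k S d by (simp add: field_simps power2_eq_square)
      also have "\<dots> = B * ((real N powr (1 - r) / (\<delta> * S))\<^sup>2 * real k powr (-(1 + 2 * (1 - r))))"
        using id4[of "real k" "real N" "\<delta> * S" "1 - r"] k S d by simp
      also have "\<dots> = B * u\<^sup>2 * real k powr (-\<gamma>)"
        unfolding u_def \<gamma>_def by (simp add: algebra_simps)
      finally show "?p k \<le> B * u\<^sup>2 * real k powr (-\<gamma>)" .
    qed
    then show ?thesis unfolding C_def u_def \<epsilon>_def \<gamma>_def .
  qed
  show ?thesis using C0 main by blast
qed

end
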